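(* Let Assumptions 1, 2 and 3 hold, and assume $f$ is uniformly convex on $X$ with parameters $\rho\ge2$ and $\mu(f)>0$ (so $f$ has a unique minimizer $x_*$ on $X$). Run SMD for $N-1$ iterations from $x_1=x_\omega$ with constant stepsizes $\gamma=\dfrac{D_{\omega,X}\sqrt{\mu(\omega)}}{\sqrt{2(M_2^2+L^2)}\sqrt N}$, and let $x^N=\frac1N\sum_{\tau=1}^Nx_\tau$, $g^N=\frac1N\sum_{\tau=1}^Ng(x_\tau,\xi_\tau)$. Then $$\mathbb E\big[|g^N-f(x_* )|\big]\le\frac{M_1+\frac{D_{\omega,X}}{\sqrt{\mu(\omega)}}\sqrt{2(M_2^2+L^2)}}{\sqrt N}\quad\text{and}\quad\mathbb E\big[\|x^N-x_*\|^\rho\big]\le\frac{D_{\omega,X}\sqrt{2(M_2^2+L^2)}}{\mu(f)\sqrt{\mu(\omega)}\sqrt N}.$$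
   Context: $f$ is uniformly convex on $X$ with parameters $\rho\ge2$, $\mu(f)>0$ if for all $t\in[0,1]$ and $x,y\in X$: $f(tx+(1-t)y)\le tf(x)+(1-t)f(y)-\frac{\mu(f)}2t(1-t)(t^{\rho-1}+(1-t)^{\rho-1})\|x-y\|^\rho$. Proximal setup: $E$ Euclidean space with norm $\|\cdot\|$, dual norm $\|\cdot\|_*$; $X$ nonempty closed bounded convex; $\omega:X\to\mathbb R$ convex continuous, continuous subgradient selection $\omega'$ on $X^o$, strongly convex with modulus $\mu(\omega)>0$ w.r.t. $\|\cdot\|$; $x_\omega=\arg\min_X\omega$; $D_{\omega,X}=\sqrt{2[\max_X\omega-\min_X\omega]}$; $\mathrm{Prox}_x(\zeta)=\arg\min_{y\in X}\{\omega(y)+y^\top(\zeta-\omega'(x))\}$. Problem: $f(x)=\mathbb E[g(x,\xi)]$, $g$ Borel, convex in $x$; $f$ convex Lipschitz on $X$; $\xi_1,\xi_2,\dots$ i.i.d.; oracle returns $g(x,\xi_t)$ and measurable $G(x,\xi_t)\in\partial_xg(x,\xi_t)$; $f'=\mathbb EG$, $\delta=g-f$, $\Delta=G-f'$. SMD: $x_{t+1}=\mathrm{Prox}_{x_t}(\gamma G(x_t,\xi_t))$. Assumption 1: $\|f'(x)\|_*\le L$ on $X$. Assumption 2: $f=\mathbb Eg$, $\mathbb EG(x,\xi)\in\partial f(x)$. Assumption 3: $\mathbb E\delta^2\le M_1^2$, $\mathbb E\|\Delta\|_*^2\le M_2^2$ on $X$. *)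

theory Defs
  imports "HOL-Probability.Probability"
begin

definition is_norm :: "('a::euclidean_space \<Rightarrow> real) \<Rightarrow> bool" where
  "is_norm nrm \<longleftrightarrow> (\<forall>x. nrm x \<ge> 0) \<and> (\<forall>x. nrm x = 0 \<longleftrightarrow> x = 0)
     \<and> (\<forall>x y. nrm (x + y) \<le> nrm x + nrm y) \<and> (\<forall>c x. nrm (c *\<^sub>R x) = \<bar>c\<bar> * nrm x)"

definition dual_norm :: "('a::euclidean_space \<Rightarrow> real) \<Rightarrow> 'a \<Rightarrow> real" where
  "dual_norm nrm z = Sup {z \<bullet> y | y. nrm y \<le> 1}"

definition unif_convex_on ::
  "'a::euclidean_space set \<Rightarrow> ('a \<Rightarrow> real) \<Rightarrow> ('a \<Rightarrow> real) \<Rightarrow> real \<Rightarrow> real \<Rightarrow> bool" where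
  "unif_convex_on X nrm f \<rho> \<mu> \<longleftrightarrow>
     (\<forall>t\<in>{0..1}. \<forall>x\<in>X. \<forall>y\<in>X.
        f (t *\<^sub>R x + (1 - t) *\<^sub>R y) \<le> t * f x + (1 - t) * f y
          - \<mu> / 2 * t * (1 - t) * (t powr (\<rho> - 1) + (1 - t) powr (\<rho> - 1)) * nrm (x - y) powr \<rho>)"

definition strongly_convex_on ::
  "'a::euclidean_space set \<Rightarrow> ('a \<Rightarrow> real) \<Rightarrow> ('a \<Rightarrow> real) \<Rightarrow> real \<Rightarrow> bool" where
  "strongly_convex_on X nrm f \<mu> \<longleftrightarrow>
     (\<forall>t\<in>{0..1}. \<forall>x\<in>X. \<forall>y\<in>X.
        f (t *\<^sub>R x + (1 - t) *\<^sub>R y) \<le> t * f x + (1 - t) * f y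
          - \<mu> / 2 * t * (1 - t) * (nrm (x - y))\<^sup>2)"

definition is_subgrad :: "'a::euclidean_space set \<Rightarrow> ('a \<Rightarrow> real) \<Rightarrow> 'a \<Rightarrow> 'a \<Rightarrow> bool" where
  "is_subgrad X f x s \<longleftrightarrow> (\<forall>y\<in>X. f y \<ge> f x + s \<bullet> (y - x))"

definition subdiff_dom :: "'a::euclidean_space set \<Rightarrow> ('a \<Rightarrow> real) \<Rightarrow> 'a set" where
  "subdiff_dom X \<omega> = {x \<in> X. \<exists>s. is_subgrad X \<omega> x s}"

definition prox ::
  "'a::euclidean_space set \<Rightarrow> ('a \<Rightarrow> real) \<Rightarrow> ('a \<Rightarrow> 'a) \<Rightarrow> 'a \<Rightarrow> 'a \<Rightarrow> 'a" where
  "prox X \<omega> \<omega>' x \<zeta> = (SOME y. y \<in> X \<and>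
      (\<forall>z\<in>X. \<omega> y + y \<bullet> (\<zeta> - \<omega>' x) \<le> \<omega> z + z \<bullet> (\<zeta> - \<omega>' x)))"

text \<open>SMD iterates: smd ... k w is x_{k+1}; x_1 = x1, x_{t+1} = Prox_{x_t}(gamma G(x_t, xi_t)).\<close>
primrec smd ::
  "'a::euclidean_space set \<Rightarrow> ('a \<Rightarrow> real) \<Rightarrow> ('a \<Rightarrow> 'a) \<Rightarrow> real \<Rightarrow> ('a \<Rightarrow> 'b \<Rightarrow> 'a)
    \<Rightarrow> 'a \<Rightarrow> (nat \<Rightarrow> 'w \<Rightarrow> 'b) \<Rightarrow> nat \<Rightarrow> 'w \<Rightarrow> 'a" where
  "smd X \<omega> \<omega>' \<gamma> G x1 \<xi> 0 w = x1"
| "smd X \<omega> \<omega>' \<gamma> G x1 \<xi> (Suc k) w =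
     prox X \<omega> \<omega>' (smd X \<omega> \<omega>' \<gamma> G x1 \<xi> k w)
       (\<gamma> *\<^sub>R G (smd X \<omega> \<omega>' \<gamma> G x1 \<xi> k w) (\<xi> (Suc k) w))"

end

theory Submission
  imports Defs
begin



lemma lim_le_lemma:
  fixes a b c0 :: real and c :: "real \<Rightarrow> real"
  assumes "\<And>t. 0 < t \<Longrightarrow> t < 1 \<Longrightarrow> a \<le> b - c t"
    and "(c \<longlongrightarrow> c0) (at_right 0)"
  shows "a \<le> b - c0"
proof (rule tendsto_le[of "at_right (0::real)" "\<lambda>t. b - c t" "b - c0" "\<lambda>_. a" a])
  show "at_right (0::real) \<noteq> bot" by simp
  show "((\<lambda>t. b - c t) \<longlongrightarrow> b - c0) (at_right 0)" using assms(2) by (intro tendsto_intros)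
  show "((\<lambda>_. a) \<longlongrightarrow> a) (at_right 0)" by simp
  show "\<forall>\<^sub>F t in at_right 0. a \<le> b - c t"
    by (rule eventually_at_rightI[of 0 1]) (use assms(1) in auto)
qed

locale nrm_loc =
  fixes nrm :: "'a::euclidean_space \<Rightarrow> real"
  assumes isn: "is_norm nrm"
begin

lemma nonneg[simp]: "nrm x \<ge> 0" using isn unfolding is_norm_def by auto
lemma zero_iff[simp]: "nrm x = 0 \<longleftrightarrow> x = 0" using isn unfolding is_norm_def by auto
lemma tri: "nrm (x + y) \<le> nrm x + nrm y" using isn unfolding is_norm_def by auto
lemma scal: "nrm (c *\<^sub>R x) = \<bar>c\<bar> * nrm x" using isn unfolding is_norm_def by auto
lemma nrm_0[simp]: "nrm 0 = 0" by simp
lemma minus: "nrm (- x) = nrm x" using scal[of "-1" x] by simp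
lemma commute: "nrm (x - y) = nrm (y - x)" using minus[of "x - y"] by simp
lemma tri_diff: "nrm (x - z) \<le> nrm (x - y) + nrm (y - z)"
  using tri[of "x - y" "y - z"] by simp

lemma sum_le: "finite S \<Longrightarrow> nrm (sum f S) \<le> (\<Sum>i\<in>S. nrm (f i))"
proof (induction S rule: finite_induct)
  case empty then show ?case using zero_iff[of 0] by simp
next
  case (insert x F) then show ?case using tri[of "f x" "sum f F"] by simp
qed

lemma upper: "\<exists>C\<ge>0. \<forall>x. nrm x \<le> C * norm x"
proof (intro exI[of _ "\<Sum>b\<in>Basis. nrm b"] conjI allI)
  show "0 \<le> (\<Sum>b\<in>Basis. nrm b)" by (simp add: sum_nonneg)
  fix x :: 'a
  have "nrm x = nrm (\<Sum>b\<in>Basis. (x \<bullet> b) *\<^sub>R b)" by (simp add: euclidean_representation)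
  also have "\<dots> \<le> (\<Sum>b\<in>Basis. nrm ((x \<bullet> b) *\<^sub>R b))" by (rule sum_le) simp
  also have "\<dots> = (\<Sum>b\<in>Basis. \<bar>x \<bullet> b\<bar> * nrm b)" by (simp add: scal)
  also have "\<dots> \<le> (\<Sum>b\<in>Basis. norm x * nrm b)"
    by (intro sum_mono mult_right_mono) (auto simp: Basis_le_norm)
  also have "\<dots> = (\<Sum>b\<in>Basis. nrm b) * norm x" by (simp add: sum_distrib_left mult.commute)
  finally show "nrm x \<le> (\<Sum>b\<in>Basis. nrm b) * norm x" .
qed

lemma cont: "continuous_on S nrm"
proof -
  obtain C where C: "C \<ge> 0" "\<And>x. nrm x \<le> C * norm x" using upper by blast
  have "C-lipschitz_on S nrm"
  proof (rule lipschitz_onI)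
    fix x y
    have "nrm x \<le> nrm y + nrm (x - y)" using tri[of y "x - y"] by simp
    moreover have "nrm y \<le> nrm x + nrm (y - x)" using tri[of x "y - x"] by simp
    moreover have "nrm (x - y) \<le> C * dist x y" "nrm (y - x) \<le> C * dist x y"
      using C(2)[of "x - y"] C(2)[of "y - x"] by (auto simp: dist_norm norm_minus_commute)
    ultimately show "dist (nrm x) (nrm y) \<le> C * dist x y" by (simp add: dist_real_def abs_le_iff)
  qed (use C in auto)
  then show ?thesis by (rule lipschitz_on_continuous_on)
qed

lemma lower: "\<exists>c>0. \<forall>x. c * norm x \<le> nrm x"
proof -
  have "compact (sphere (0::'a) 1)" by simp
  moreover have "sphere (0::'a) 1 \<noteq> {}" by simp
  ultimately have "\<exists>x0\<in>sphere 0 1. \<forall>y\<in>sphere 0 1. nrm x0 \<le> nrm y"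
    by (rule continuous_attains_inf[OF _ _ cont])
  then obtain x0 where x0: "x0 \<in> sphere 0 1" "\<And>y. y \<in> sphere 0 1 \<Longrightarrow> nrm x0 \<le> nrm y"
    by blast
  have "x0 \<noteq> 0" using x0(1) by auto
  then have pos: "nrm x0 > 0" using nonneg[of x0] zero_iff[of x0] by linarith
  show ?thesis
  proof (intro exI[of _ "nrm x0"] conjI allI pos)
    fix x :: 'a
    show "nrm x0 * norm x \<le> nrm x"
    proof (cases "x = 0")
      case False
      have "nrm x0 \<le> nrm ((1 / norm x) *\<^sub>R x)" using x0(2)[of "(1 / norm x) *\<^sub>R x"] False by simp
      also have "\<dots> = nrm x / norm x" by (simp add: scal)
      finally show ?thesis using False by (simp add: field_simps)
    qed simp
  qed
qed

definition "cl = (SOME c. c > 0 \<and> (\<forall>x. c * norm x \<le> nrm x))"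
lemma cl: "cl > 0" "cl * norm x \<le> nrm x"
  using someI_ex[OF lower] unfolding cl_def[symmetric] by auto

abbreviation "dn \<equiv> dual_norm nrm"

lemma inner_le_div: "nrm y \<le> 1 \<Longrightarrow> z \<bullet> y \<le> norm z / cl"
proof -
  assume y: "nrm y \<le> 1"
  have "norm y \<le> 1 / cl" using cl(2)[of y] y cl(1) by (simp add: field_simps)
  have "z \<bullet> y \<le> norm z * norm y" by (rule norm_cauchy_schwarz)
  also have "\<dots> \<le> norm z * (1 / cl)" using \<open>norm y \<le> 1 / cl\<close> by (rule mult_left_mono) simp
  finally have "z \<bullet> y \<le> norm z * (1 / cl)" .
  then show ?thesis by simp
qed

lemma dn_bdd: "bdd_above {z \<bullet> y | y. nrm y \<le> 1}"
  unfolding bdd_above_def by (intro exI[of _ "norm z / cl"]) (auto intro: inner_le_div)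

lemma dn_ge: "nrm y \<le> 1 \<Longrightarrow> z \<bullet> y \<le> dn z"
  unfolding dual_norm_def by (rule cSup_upper[OF _ dn_bdd]) auto

lemma dn_nonneg: "dn z \<ge> 0" using dn_ge[of 0 z] by simp

lemma dn_le: "(\<And>y. nrm y \<le> 1 \<Longrightarrow> z \<bullet> y \<le> B) \<Longrightarrow> dn z \<le> B"
proof -
  assume h: "\<And>y. nrm y \<le> 1 \<Longrightarrow> z \<bullet> y \<le> B"
  have "0 \<in> {z \<bullet> y | y. nrm y \<le> 1}" by (intro CollectI exI[of _ 0]) simp
  then have ne: "{z \<bullet> y | y. nrm y \<le> 1} \<noteq> {}" by blast
  show ?thesis unfolding dual_norm_def by (rule cSup_least[OF ne]) (use h in auto)
qed

lemma dn_inner: "z \<bullet> y \<le> dn z * nrm y"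
proof (cases "y = 0")
  case False
  then have p: "nrm y > 0" using nonneg[of y] zero_iff[of y] by linarith
  have "z \<bullet> ((1 / nrm y) *\<^sub>R y) \<le> dn z" by (rule dn_ge) (use p in \<open>simp add: scal\<close>)
  then show ?thesis using p by (simp add: field_simps)
qed (simp add: dn_nonneg)

lemma dn_abs_inner: "\<bar>z \<bullet> y\<bar> \<le> dn z * nrm y"
  using dn_inner[of z y] dn_inner[of z "-y"] by (simp add: minus abs_le_iff)

lemma dn_tri: "dn (a + b) \<le> dn a + dn b"
proof (rule dn_le)
  fix y assume "nrm y \<le> 1"
  then have "a \<bullet> y \<le> dn a" "b \<bullet> y \<le> dn b" by (auto intro: dn_ge)
  then show "(a + b) \<bullet> y \<le> dn a + dn b" by (simp add: inner_add_left)
qed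

lemma dn_minus: "dn (- a) = dn a"
proof -
  have "dn (- a) \<le> dn a" for a
  proof (rule dn_le)
    fix y assume "nrm y \<le> 1"
    then have "nrm (-y) \<le> 1" by (simp add: minus)
    then have "a \<bullet> (-y) \<le> dn a" by (rule dn_ge)
    then show "(-a) \<bullet> y \<le> dn a" by simp
  qed
  from this[of a] this[of "-a"] show ?thesis by simp
qed

lemma dn_upper: "dn z \<le> norm z / cl"
  by (rule dn_le) (rule inner_le_div)

end



lemma sq_sum_expand: "norm (a + b)^2 = norm (a::'a::real_inner)^2 + 2 * (a \<bullet> b) + norm b^2"
  by (simp add: power2_norm_eq_inner inner_add_left inner_add_right inner_commute)

lemma young: "(d::real) * n - m / 2 * n^2 \<le> d^2 / (2 * m)" if "m > 0" for d n m
proof -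
  have "0 \<le> (d - m * n)^2 / (2 * m)" using that by simp
  then show ?thesis using that by (simp add: power2_eq_square field_simps)
qed

lemma aux_density:
  fixes c pw Nq Np b k t ip nz :: real
  assumes "c + k / 2 * Nq \<le> pw + k / 2 * Np" "pw \<le> t * b + (1 - t) * c"
    "Np = Nq + 2 * t * ip + t^2 * nz" "t > 0"
  shows "0 \<le> (b - c) + k * ip + k / 2 * t * nz"
proof -
  have "t * ((b - c) + k * ip + k / 2 * t * nz) = (t * b + (1 - t) * c + k / 2 * Np) - (c + k / 2 * Nq)"
    using assms(3) by (simp add: algebra_simps power2_eq_square)
  also have "\<dots> \<ge> 0" using assms(1,2) by linarith
  finally show ?thesis using assms(4) by (simp add: zero_le_mult_iff)
qed

locale prox_loc = nrm_loc nrm for nrm :: "'a::euclidean_space \<Rightarrow> real" +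
  fixes X :: "'a set" and \<omega> :: "'a \<Rightarrow> real" and \<omega>' :: "'a \<Rightarrow> 'a" and \<mu> :: real
  assumes X: "X \<noteq> {}" "closed X" "bounded X" "convex X"
  and \<omega>_conv: "convex_on X \<omega>" and \<omega>_cont: "continuous_on X \<omega>"
  and \<omega>'_sub: "\<forall>x\<in>subdiff_dom X \<omega>. is_subgrad X \<omega> x (\<omega>' x)"
  and \<omega>'_cont: "continuous_on (subdiff_dom X \<omega>) \<omega>'"
  and \<mu>_pos: "\<mu> > 0" and \<omega>_strong: "strongly_convex_on X nrm \<omega> \<mu>"
begin

lemma compX: "compact X" using X by (simp add: compact_eq_bounded_closed)

lemma sd_X: "x \<in> subdiff_dom X \<omega> \<Longrightarrow> x \<in> X" by (simp add: subdiff_dom_def)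

lemma argmin_exists: "\<exists>y\<in>X. \<forall>z\<in>X. \<omega> y + y \<bullet> v \<le> \<omega> z + z \<bullet> v"
proof -
  have "continuous_on X (\<lambda>y. \<omega> y + y \<bullet> v)" by (intro continuous_intros \<omega>_cont)
  from continuous_attains_inf[OF compX X(1) this] show ?thesis .
qed

definition "pm v = (SOME y. y \<in> X \<and> (\<forall>z\<in>X. \<omega> y + y \<bullet> v \<le> \<omega> z + z \<bullet> v))"

lemma pm: "pm v \<in> X" "\<And>z. z \<in> X \<Longrightarrow> \<omega> (pm v) + pm v \<bullet> v \<le> \<omega> z + z \<bullet> v"
proof -
  have "\<exists>y. y \<in> X \<and> (\<forall>z\<in>X. \<omega> y + y \<bullet> v \<le> \<omega> z + z \<bullet> v)" using argmin_exists by blast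
  from someI_ex[OF this] show "pm v \<in> X" "\<And>z. z \<in> X \<Longrightarrow> \<omega> (pm v) + pm v \<bullet> v \<le> \<omega> z + z \<bullet> v"
    unfolding pm_def[symmetric] by auto
qed

lemma prox_eq: "prox X \<omega> \<omega>' x \<zeta> = pm (\<zeta> - \<omega>' x)"
  by (simp add: prox_def pm_def)

lemma pm_subgrad: "is_subgrad X \<omega> (pm v) (- v)"
  unfolding is_subgrad_def
proof
  fix z assume "z \<in> X"
  have h: "\<omega> (pm v) + pm v \<bullet> v \<le> \<omega> z + z \<bullet> v" by (rule pm(2)) fact
  have "- v \<bullet> (z - pm v) = pm v \<bullet> v - z \<bullet> v" by (simp add: inner_diff_right inner_commute)
  with h show "\<omega> (pm v) + - v \<bullet> (z - pm v) \<le> \<omega> z" by linarith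
qed

lemma pm_sd: "pm v \<in> subdiff_dom X \<omega>"
  using pm(1) pm_subgrad unfolding subdiff_dom_def by blast

lemma strong_subgrad:
  assumes x: "x \<in> X" and s: "is_subgrad X \<omega> x s" and u: "u \<in> X"
  shows "\<omega> x + s \<bullet> (u - x) + \<mu> / 2 * (nrm (u - x))\<^sup>2 \<le> \<omega> u"
proof -
  let ?n = "(nrm (u - x))\<^sup>2"
  have "s \<bullet> (u - x) \<le> (\<omega> u - \<omega> x) - \<mu> / 2 * (1 - t) * ?n" if t: "0 < t" "t < 1" for t
  proof -
    let ?p = "t *\<^sub>R u + (1 - t) *\<^sub>R x"
    have p: "?p \<in> X" using X(4) x u t by (simp add: convex_def)
    have 1: "\<omega> ?p \<le> t * \<omega> u + (1 - t) * \<omega> x - \<mu> / 2 * t * (1 - t) * ?n"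
      using \<omega>_strong t x u unfolding strongly_convex_on_def by auto
    have 2: "\<omega> x + s \<bullet> (?p - x) \<le> \<omega> ?p" using s p unfolding is_subgrad_def by blast
    have "?p - x = t *\<^sub>R (u - x)" by (simp add: algebra_simps)
    then have "s \<bullet> (?p - x) = t * (s \<bullet> (u - x))" by simp
    with 1 2 have "t * (s \<bullet> (u - x)) \<le> t * ((\<omega> u - \<omega> x) - \<mu> / 2 * (1 - t) * ?n)"
      by (simp add: algebra_simps)
    then show ?thesis using t by simp
  qed
  note h = this
  have tl: "((\<lambda>t. \<mu> / 2 * (1 - t) * ?n) \<longlongrightarrow> \<mu> / 2 * (1 - 0) * ?n) (at_right 0)"
    by (intro tendsto_intros)
  have "s \<bullet> (u - x) \<le> (\<omega> u - \<omega> x) - \<mu> / 2 * (1 - 0) * ?n"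
    by (rule lim_le_lemma[OF h tl])
  then show ?thesis by simp
qed

lemma pm_lip: "\<mu> * nrm (pm v1 - pm v2) \<le> dn (v2 - v1)"
proof -
  let ?y1 = "pm v1" and ?y2 = "pm v2"
  let ?n = "nrm (?y1 - ?y2)"
  have a0: "\<omega> ?y1 + (-v1) \<bullet> (?y2 - ?y1) + \<mu> / 2 * (nrm (?y2 - ?y1))\<^sup>2 \<le> \<omega> ?y2"
    by (rule strong_subgrad[OF pm(1) pm_subgrad pm(1)])
  have a: "\<omega> ?y1 + (-v1) \<bullet> (?y2 - ?y1) + \<mu> / 2 * ?n\<^sup>2 \<le> \<omega> ?y2"
    using a0 commute[of ?y2 ?y1] by simp
  have b: "\<omega> ?y2 + (-v2) \<bullet> (?y1 - ?y2) + \<mu> / 2 * ?n\<^sup>2 \<le> \<omega> ?y1"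
    by (rule strong_subgrad[OF pm(1) pm_subgrad pm(1)])
  have "(-v1) \<bullet> (?y2 - ?y1) + (-v2) \<bullet> (?y1 - ?y2) = (v2 - v1) \<bullet> (?y2 - ?y1)"
    by (simp add: algebra_simps)
  with a b have "\<mu> * ?n\<^sup>2 \<le> (v2 - v1) \<bullet> (?y1 - ?y2)"
    by (simp add: algebra_simps)
  also have "\<dots> \<le> dn (v2 - v1) * ?n" by (rule dn_inner)
  finally have c: "\<mu> * ?n * ?n \<le> dn (v2 - v1) * ?n" by (simp add: power2_eq_square mult.assoc)
  show ?thesis
  proof (cases "?n = 0")
    case True then show ?thesis using dn_nonneg by simp
  next
    case False then have "?n > 0" using nonneg by (metis less_eq_real_def)
    with c show ?thesis by simp
  qed
qed

lemma pm_cont: "continuous_on S pm"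
proof -
  have "(1 / (cl * cl * \<mu>))-lipschitz_on S pm"
  proof (rule lipschitz_onI)
    fix v1 v2
    have "cl * norm (pm v1 - pm v2) \<le> nrm (pm v1 - pm v2)" by (rule cl)
    also have "\<dots> \<le> dn (v2 - v1) / \<mu>" using pm_lip \<mu>_pos by (simp add: field_simps)
    also have "\<dots> \<le> norm (v2 - v1) / cl / \<mu>" using divide_right_mono[OF dn_upper[of "v2 - v1"], of \<mu>] \<mu>_pos by simp
    finally have "norm (pm v1 - pm v2) \<le> norm (v2 - v1) / (cl * cl * \<mu>)"
      using cl(1) \<mu>_pos by (simp add: field_simps)
    then show "dist (pm v1) (pm v2) \<le> 1 / (cl * cl * \<mu>) * dist v1 v2"
      by (simp add: dist_norm norm_minus_commute)
  qed (use cl(1) \<mu>_pos in simp)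
  then show ?thesis by (rule lipschitz_on_continuous_on)
qed

lemma \<omega>_bdd: "\<exists>B\<ge>0. \<forall>x\<in>X. \<bar>\<omega> x\<bar> \<le> B"
proof -
  have "bounded (\<omega> ` X)" by (rule compact_imp_bounded[OF compact_continuous_image[OF \<omega>_cont compX]])
  then obtain B where "\<forall>x\<in>X. norm (\<omega> x) \<le> B" by (auto simp: bounded_iff)
  moreover have "B \<ge> 0"
  proof -
    obtain x where "x \<in> X" using X(1) by blast
    then show ?thesis using calculation norm_ge_zero[of "\<omega> x"] by (meson order_trans)
  qed
  ultimately show ?thesis by auto
qed

lemma density:
  assumes w: "w \<in> X" and e: "e > 0"
  shows "\<exists>q\<in>subdiff_dom X \<omega>. norm (q - w) \<le> e"
proof -
  obtain B where B: "B \<ge> 0" "\<And>x. x \<in> X \<Longrightarrow> \<bar>\<omega> x\<bar> \<le> B" using \<omega>_bdd by blast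
  define k where "k = (4 * B + 1) / e^2"
  have k: "k > 0" using B e by (simp add: k_def)
  have "continuous_on X (\<lambda>y. \<omega> y + k / 2 * (norm (y - w))^2)" by (intro continuous_intros \<omega>_cont)
  from continuous_attains_inf[OF compX X(1) this] obtain q where
    q: "q \<in> X" "\<And>z. z \<in> X \<Longrightarrow> \<omega> q + k / 2 * (norm (q - w))^2 \<le> \<omega> z + k / 2 * (norm (z - w))^2"
    by blast
  have sg: "is_subgrad X \<omega> q (k *\<^sub>R (w - q))"
    unfolding is_subgrad_def
  proof
    fix z assume z: "z \<in> X"
    let ?a = "\<omega> q + (k *\<^sub>R (w - q)) \<bullet> (z - q)"
    have "?a \<le> \<omega> z - (- (k / 2 * t * (norm (z - q))^2))" if t: "0 < t" "t < 1" for t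
    proof -
      let ?p = "t *\<^sub>R z + (1 - t) *\<^sub>R q"
      have p: "?p \<in> X" using X(4) z q(1) t by (simp add: convex_def)
      have 1: "\<omega> ?p \<le> t * \<omega> z + (1 - t) * \<omega> q"
        using \<omega>_conv t z q(1) unfolding convex_on_def by auto
      have pe: "?p - w = (q - w) + t *\<^sub>R (z - q)" by (simp add: algebra_simps)
      have 2: "(norm (?p - w))^2 = (norm (q - w))^2 + 2 * t * ((q - w) \<bullet> (z - q)) + t^2 * (norm (z - q))^2"
        unfolding pe sq_sum_expand by (simp add: power_mult_distrib)
      have 3: "\<omega> q + k / 2 * (norm (q - w))^2 \<le> \<omega> ?p + k / 2 * (norm (?p - w))^2" by (rule q(2)[OF p])
      have "0 \<le> (\<omega> z - \<omega> q) + (k * ((q - w) \<bullet> (z - q))) + (k / 2 * t * (norm (z - q))^2)"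
        by (rule aux_density[OF 3 1 2 t(1)])
      moreover have "(k *\<^sub>R (w - q)) \<bullet> (z - q) = - (k * ((q - w) \<bullet> (z - q)))"
        by (simp add: inner_diff_left algebra_simps)
      ultimately show ?thesis by linarith
    qed
    note h = this
    have tl: "((\<lambda>t. - (k / 2 * t * (norm (z - q))^2)) \<longlongrightarrow> - (k / 2 * 0 * (norm (z - q))^2)) (at_right 0)"
      by (intro tendsto_intros)
    have "?a \<le> \<omega> z - (- (k / 2 * 0 * (norm (z - q))^2))"
      by (rule lim_le_lemma[OF h tl])
    then show "\<omega> q + (k *\<^sub>R (w - q)) \<bullet> (z - q) \<le> \<omega> z" by simp
  qed
  then have qs: "q \<in> subdiff_dom X \<omega>" using q(1) unfolding subdiff_dom_def by blast
  have "k / 2 * (norm (q - w))^2 \<le> \<omega> w - \<omega> q" using q(2)[OF w] by simp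
  also have "\<dots> \<le> 2 * B" using B(2)[OF w] B(2)[OF q(1)] by linarith
  finally have "(norm (q - w))^2 \<le> 4 * B / k" using k by (simp add: field_simps)
  also have "\<dots> = 4 * B * e^2 / (4 * B + 1)" using e B by (simp add: k_def field_simps)
  also have "\<dots> \<le> e^2" using e B by (simp add: field_simps)
  finally have "norm (q - w) \<le> e" using e by (simp add: power2_le_iff_abs_le)
  with qs show ?thesis by blast
qed

lemma key:
  assumes x: "x \<in> subdiff_dom X \<omega>" and s: "is_subgrad X \<omega> x s" and u: "u \<in> X"
  shows "s \<bullet> (u - x) \<le> \<omega>' x \<bullet> (u - x)"
proof -
  define l :: "nat \<Rightarrow> real" where "l n = 1 / (real n + 1)" for n
  have lpos: "l n > 0" for n by (simp add: l_def)
  have l1: "l n \<le> 1" for n by (simp add: l_def)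
  have "l = (\<lambda>n. inverse (real (Suc n)))" by (simp add: l_def fun_eq_iff inverse_eq_divide add.commute)
  then have l0: "l \<longlonglongrightarrow> 0" using LIMSEQ_inverse_real_of_nat by simp
  have xX: "x \<in> X" using x by (rule sd_X)
  define w where "w n = x + l n *\<^sub>R (u - x)" for n
  have wX: "w n \<in> X" for n
  proof -
    have "w n = l n *\<^sub>R u + (1 - l n) *\<^sub>R x" by (simp add: w_def algebra_simps)
    then show ?thesis using X(4) xX u lpos[of n] l1[of n] by (simp add: convex_def)
  qed
  have "\<forall>n. \<exists>q\<in>subdiff_dom X \<omega>. norm (q - w n) \<le> (l n)^2"
  proof
    fix n show "\<exists>q\<in>subdiff_dom X \<omega>. norm (q - w n) \<le> (l n)^2"
      by (rule density[OF wX]) (use lpos[of n] in simp)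
  qed
  then obtain q where q: "\<And>n. q n \<in> subdiff_dom X \<omega>" "\<And>n. norm (q n - w n) \<le> (l n)^2"
    by metis
  have mono: "0 \<le> (\<omega>' (q n) - s) \<bullet> ((1 / l n) *\<^sub>R (q n - x))" for n
  proof -
    have qX: "q n \<in> X" using q(1) by (rule sd_X)
    have a: "\<omega> (q n) + \<omega>' (q n) \<bullet> (x - q n) \<le> \<omega> x"
      using \<omega>'_sub q(1)[of n] xX unfolding is_subgrad_def by blast
    have b: "\<omega> x + s \<bullet> (q n - x) \<le> \<omega> (q n)" using s qX unfolding is_subgrad_def by blast
    have "0 \<le> (\<omega>' (q n) - s) \<bullet> (q n - x)" using a b by (simp add: algebra_simps inner_diff_left inner_diff_right)
    then show ?thesis using lpos[of n] by simp
  qed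
  define d where "d n = (1 / l n) *\<^sub>R (q n - x)" for n
  have dd: "d n = (u - x) + (1 / l n) *\<^sub>R (q n - w n)" for n
    using lpos[of n] by (simp add: d_def w_def algebra_simps)
  have r0: "(\<lambda>n. (1 / l n) *\<^sub>R (q n - w n)) \<longlonglongrightarrow> 0"
  proof (rule Lim_null_comparison[OF _ l0])
    show "\<forall>\<^sub>F n in sequentially. norm ((1 / l n) *\<^sub>R (q n - w n)) \<le> l n"
    proof (intro always_eventually allI)
      fix n
      have "norm ((1 / l n) *\<^sub>R (q n - w n)) = norm (q n - w n) / l n" using lpos[of n] by simp
      also have "\<dots> \<le> (l n)^2 / l n" using q(2)[of n] lpos[of n] by (simp add: divide_right_mono)
      also have "\<dots> = l n" using lpos[of n] by (simp add: power2_eq_square)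
      finally show "norm ((1 / l n) *\<^sub>R (q n - w n)) \<le> l n" .
    qed
  qed
  have dlim: "d \<longlonglongrightarrow> u - x"
    unfolding dd using tendsto_add[OF tendsto_const[of "u - x"] r0] by simp
  have qlim: "q \<longlonglongrightarrow> x"
  proof -
    have qe: "q = (\<lambda>n. x + l n *\<^sub>R d n)" proof
    fix n show "q n = x + l n *\<^sub>R d n" using lpos[of n] by (simp add: d_def)
  qed
    have "(\<lambda>n. x + l n *\<^sub>R d n) \<longlonglongrightarrow> x + 0 *\<^sub>R (u - x)"
      by (intro tendsto_intros l0 dlim)
    then show ?thesis unfolding qe by simp
  qed
  have glim: "(\<lambda>n. \<omega>' (q n)) \<longlonglongrightarrow> \<omega>' x"
    by (rule continuous_on_tendsto_compose[OF \<omega>'_cont qlim x]) (use q(1) in simp)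
  have "(\<lambda>n. (\<omega>' (q n) - s) \<bullet> d n) \<longlonglongrightarrow> (\<omega>' x - s) \<bullet> (u - x)"
    by (intro tendsto_intros glim dlim)
  moreover have "\<forall>n. 0 \<le> (\<omega>' (q n) - s) \<bullet> d n" using mono by (simp add: d_def)
  ultimately have "0 \<le> (\<omega>' x - s) \<bullet> (u - x)"
    by (intro LIMSEQ_le_const) auto
  then show ?thesis by (simp add: inner_diff_left)
qed

definition "W x u = \<omega> u - \<omega> x - \<omega>' x \<bullet> (u - x)"

lemma W_lower: "x \<in> subdiff_dom X \<omega> \<Longrightarrow> u \<in> X \<Longrightarrow> \<mu> / 2 * (nrm (u - x))\<^sup>2 \<le> W x u"
proof -
  assume x: "x \<in> subdiff_dom X \<omega>" and u: "u \<in> X"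
  have "is_subgrad X \<omega> x (\<omega>' x)" using \<omega>'_sub x by blast
  from strong_subgrad[OF sd_X[OF x] this u] show ?thesis by (simp add: W_def)
qed

lemma W_nonneg: "x \<in> subdiff_dom X \<omega> \<Longrightarrow> u \<in> X \<Longrightarrow> 0 \<le> W x u"
proof -
  assume x: "x \<in> subdiff_dom X \<omega>" and u: "u \<in> X"
  have "0 \<le> \<mu> / 2 * (nrm (u - x))\<^sup>2" using \<mu>_pos by simp
  with W_lower[OF x u] show ?thesis by linarith
qed

lemma step:
  assumes x: "x \<in> subdiff_dom X \<omega>" and u: "u \<in> X"
  shows "\<zeta> \<bullet> (x - u) \<le> W x u - W (prox X \<omega> \<omega>' x \<zeta>) u + (dn \<zeta>)^2 / (2 * \<mu>)"
proof -
  let ?y = "prox X \<omega> \<omega>' x \<zeta>"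
  have yeq: "?y = pm (\<zeta> - \<omega>' x)" by (rule prox_eq)
  have ysd: "?y \<in> subdiff_dom X \<omega>" unfolding yeq by (rule pm_sd)
  have ysg: "is_subgrad X \<omega> ?y (\<omega>' x - \<zeta>)" unfolding yeq using pm_subgrad[of "\<zeta> - \<omega>' x"] by simp
  have k: "(\<omega>' x - \<zeta>) \<bullet> (u - ?y) \<le> \<omega>' ?y \<bullet> (u - ?y)" by (rule key[OF ysd ysg u])
  have xX: "x \<in> X" using x by (rule sd_X)
  have yX: "?y \<in> X" using ysd by (rule sd_X)
  have sc: "\<omega> x + \<omega>' x \<bullet> (?y - x) + \<mu> / 2 * (nrm (?y - x))\<^sup>2 \<le> \<omega> ?y"
    using strong_subgrad[OF xX _ yX] \<omega>'_sub x by blast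
  have i: "\<zeta> \<bullet> (x - ?y) \<le> dn \<zeta> * nrm (?y - x)" using dn_inner[of \<zeta> "x - ?y"] commute by simp
  have yg: "dn \<zeta> * nrm (?y - x) - \<mu> / 2 * (nrm (?y - x))\<^sup>2 \<le> (dn \<zeta>)^2 / (2 * \<mu>)"
    by (rule young[OF \<mu>_pos])
  have "\<zeta> \<bullet> (x - u) = \<zeta> \<bullet> (?y - u) + \<zeta> \<bullet> (x - ?y)" by (simp add: inner_diff_right)
  moreover have "W x u - W ?y u = \<omega> ?y - \<omega> x - \<omega>' x \<bullet> (u - x) + \<omega>' ?y \<bullet> (u - ?y)"
    unfolding W_def by simp
  moreover have "(\<omega>' x - \<zeta>) \<bullet> (u - ?y) = \<omega>' x \<bullet> (u - x) - \<omega>' x \<bullet> (?y - x) - \<zeta> \<bullet> (u - ?y)"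
    by (simp add: algebra_simps inner_diff_left inner_diff_right)
  moreover have "\<zeta> \<bullet> (?y - u) = - (\<zeta> \<bullet> (u - ?y))" by (simp add: inner_diff_right)
  ultimately show ?thesis using k sc i yg by linarith
qed

lemma W_min:
  assumes x0: "x0 \<in> X" "\<forall>y\<in>X. \<omega> x0 \<le> \<omega> y" and u: "u \<in> X"
  shows "W x0 u \<le> \<omega> u - \<omega> x0" "x0 \<in> subdiff_dom X \<omega>"
proof -
  have sg: "is_subgrad X \<omega> x0 0" using x0 unfolding is_subgrad_def by simp
  then show sd: "x0 \<in> subdiff_dom X \<omega>" using x0(1) unfolding subdiff_dom_def by blast
  have "0 \<bullet> (u - x0) \<le> \<omega>' x0 \<bullet> (u - x0)" by (rule key[OF sd sg u])
  then show "W x0 u \<le> \<omega> u - \<omega> x0" unfolding W_def by simp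
qed

end



lemma powr_convex0: assumes "p \<ge> 1" shows "convex_on {0..} (\<lambda>x::real. x powr p)"
proof (rule convex_onI)
  show "convex {0::real..}" by simp
  fix t x y :: real assume t: "0 < t" "t < 1" and x: "x \<in> {0..}" and y: "y \<in> {0..}"
  have tp: "s powr p \<le> s" if "0 \<le> s" "s \<le> 1" for s :: real
  proof (cases "s = 0")
    case False
    then have "s powr p \<le> s powr 1" using that assms by (intro powr_mono') auto
    then show ?thesis using that False by simp
  qed (use assms in simp)
  show "((1 - t) *\<^sub>R x + t *\<^sub>R y) powr p \<le> (1 - t) * x powr p + t * y powr p"
  proof (cases "x = 0 \<or> y = 0")
    case True
    then show ?thesis
    proof
      assume x0: "x = 0"
      have "(t * y) powr p = t powr p * y powr p" using t y by (simp add: powr_mult)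
      also have "\<dots> \<le> t * y powr p" using tp[of t] t by (intro mult_right_mono) auto
      finally show ?thesis using x0 assms by simp
    next
      assume y0: "y = 0"
      have "((1 - t) * x) powr p = (1 - t) powr p * x powr p" using t x by (simp add: powr_mult)
      also have "\<dots> \<le> (1 - t) * x powr p" using tp[of "1 - t"] t by (intro mult_right_mono) auto
      finally show ?thesis using y0 assms by simp
    qed
  next
    case False
    then have "x \<in> {0<..}" "y \<in> {0<..}" using x y by auto
    from convex_onD[OF powr_convex[OF assms], of t x y] t this show ?thesis by simp
  qed
qed

lemma avg_powr:
  fixes r :: "nat \<Rightarrow> real"
  assumes "N \<ge> 1" "\<And>k. k < N \<Longrightarrow> r k \<ge> 0" "p \<ge> 1"
  shows "((1 / real N) * (\<Sum>k<N. r k)) powr p \<le> (1 / real N) * (\<Sum>k<N. r k powr p)"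
proof -
  have "0 \<in> {..<N}" using assms(1) by simp
  then have ne: "{..<N} \<noteq> {}" by blast
  have "(\<Sum>k<N. (1 / real N) *\<^sub>R r k) powr p \<le> (\<Sum>k<N. (1 / real N) * (r k) powr p)"
    by (rule convex_on_sum[OF _ ne powr_convex0[OF assms(3)]]) (use assms in auto)
  then show ?thesis by (simp add: sum_distrib_left)
qed

lemma (in nrm_loc) unif_grad:
  fixes f :: "'a \<Rightarrow> real"
  assumes X: "convex X" and f: "unif_convex_on X nrm f \<rho> \<mu>" and \<rho>: "\<rho> > 1"
    and x: "x \<in> X" and xs: "xs \<in> X" "\<forall>y\<in>X. f xs \<le> f y"
    and s: "is_subgrad X f x s"
  shows "\<mu> * nrm (x - xs) powr \<rho> \<le> s \<bullet> (x - xs)"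
proof -
  let ?n = "nrm (x - xs) powr \<rho>"
  define c where "c t = \<mu> / 2 * (1 - t) * (t powr (\<rho> - 1) + (1 - t) powr (\<rho> - 1)) * ?n" for t
  have cl: "(c \<longlongrightarrow> \<mu> / 2 * (1 - 0) * (0 powr (\<rho> - 1) + (1 - 0) powr (\<rho> - 1)) * ?n) (at_right 0)"
    unfolding c_def
  proof (intro tendsto_intros)
    show "0 \<noteq> 0 \<or> 0 < \<rho> - 1 \<and> (\<forall>\<^sub>F t in at_right 0. 0 \<le> (t::real))"
    proof -
      have "\<forall>\<^sub>F t in at_right 0. 0 \<le> (t::real)" by (rule eventually_at_rightI[of 0 "1::real"]) auto
      then show ?thesis using \<rho> by auto
    qed
  qed (use \<rho> in auto)
  have c0: "\<mu> / 2 * (1 - 0) * (0 powr (\<rho> - 1) + (1 - 0) powr (\<rho> - 1)) * ?n = \<mu> / 2 * ?n" by simp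
  have ncomm: "nrm (xs - x) = nrm (x - xs)" by (rule commute)
  have i1: "f xs \<le> f x - c t" if t: "0 < t" "t < 1" for t
  proof -
    let ?p = "t *\<^sub>R x + (1 - t) *\<^sub>R xs"
    have p: "?p \<in> X" using X x xs t by (simp add: convex_def)
    have "f ?p \<le> t * f x + (1 - t) * f xs - \<mu> / 2 * t * (1 - t) * (t powr (\<rho> - 1) + (1 - t) powr (\<rho> - 1)) * ?n"
      using f t x xs unfolding unif_convex_on_def by auto
    moreover have "f xs \<le> f ?p" using xs p by blast
    moreover have "\<mu> / 2 * t * (1 - t) * (t powr (\<rho> - 1) + (1 - t) powr (\<rho> - 1)) * ?n = t * c t"
      by (simp only: c_def mult_ac)
    moreover have "(1 - t) * f xs = f xs - t * f xs" by (simp add: algebra_simps)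
    moreover have "t * (f x - c t) = t * f x - t * c t" by (simp add: algebra_simps)
    ultimately have "t * f xs \<le> t * (f x - c t)" by linarith
    then show ?thesis using t by simp
  qed
  have i2: "s \<bullet> (xs - x) \<le> (f xs - f x) - c t" if t: "0 < t" "t < 1" for t
  proof -
    let ?p = "t *\<^sub>R xs + (1 - t) *\<^sub>R x"
    have p: "?p \<in> X" using X x xs t by (simp add: convex_def)
    have "f ?p \<le> t * f xs + (1 - t) * f x - \<mu> / 2 * t * (1 - t) * (t powr (\<rho> - 1) + (1 - t) powr (\<rho> - 1)) * ?n"
    proof -
      have "f ?p \<le> t * f xs + (1 - t) * f x - \<mu> / 2 * t * (1 - t) * (t powr (\<rho> - 1) + (1 - t) powr (\<rho> - 1)) * nrm (xs - x) powr \<rho>"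
        using f t x xs unfolding unif_convex_on_def by auto
      then show ?thesis by (simp only: ncomm)
    qed
    moreover have "f x + s \<bullet> (?p - x) \<le> f ?p" using s p unfolding is_subgrad_def by blast
    moreover have "s \<bullet> (?p - x) = t * (s \<bullet> (xs - x))"
    proof -
      have "?p - x = t *\<^sub>R (xs - x)" by (simp add: algebra_simps)
      then show ?thesis by simp
    qed
    moreover have "\<mu> / 2 * t * (1 - t) * (t powr (\<rho> - 1) + (1 - t) powr (\<rho> - 1)) * ?n = t * c t"
      by (simp only: c_def mult_ac)
    moreover have "(1 - t) * f x = f x - t * f x" by (simp add: algebra_simps)
    moreover have "t * ((f xs - f x) - c t) = t * f xs - t * f x - t * c t" by (simp add: algebra_simps)
    ultimately have "t * (s \<bullet> (xs - x)) \<le> t * ((f xs - f x) - c t)" by linarith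
    then show ?thesis using t by simp
  qed
  have a: "f xs \<le> f x - \<mu> / 2 * ?n" using lim_le_lemma[OF i1 cl] c0 by simp
  have b: "s \<bullet> (xs - x) \<le> (f xs - f x) - \<mu> / 2 * ?n" using lim_le_lemma[OF i2 cl] c0 by simp
  have "s \<bullet> (xs - x) = - (s \<bullet> (x - xs))" by (simp add: inner_diff_right)
  with a b show ?thesis by linarith
qed




lemma smd_cong:
  "(\<And>i. i \<in> {1..k} \<Longrightarrow> \<xi>1 i w1 = \<xi>2 i w2) \<Longrightarrow>
   smd X \<omega> \<omega>' \<gamma> G x1 \<xi>1 k w1 = smd X \<omega> \<omega>' \<gamma> G x1 \<xi>2 k w2"
  by (induction k) auto

lemma meas_cont_comp:
  assumes "\<phi> \<in> borel_measurable N" "\<And>x. x \<in> space N \<Longrightarrow> \<phi> x \<in> S" "continuous_on S \<psi>"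
  shows "(\<lambda>x. \<psi> (\<phi> x)) \<in> borel_measurable N"
proof -
  have "\<phi> \<in> measurable N (restrict_space borel S)"
    by (rule measurable_restrict_space2) (use assms in auto)
  moreover have "\<psi> \<in> borel_measurable (restrict_space borel S)"
    by (rule borel_measurable_continuous_on_restrict[OF assms(3)])
  ultimately show ?thesis using measurable_comp[of \<phi> N "restrict_space borel S" \<psi> borel] by (simp add: comp_def)
qed

context nrm_loc begin

lemma dn_lip: "\<bar>dn a - dn b\<bar> \<le> norm (a - b) / cl"
proof -
  have "dn a \<le> dn (a - b) + dn b" using dn_tri[of "a - b" b] by simp
  moreover have "dn b \<le> dn (b - a) + dn a" using dn_tri[of "b - a" a] by simp
  moreover have "dn (b - a) = dn (a - b)" using dn_minus[of "a - b"] by simp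
  moreover have "dn (a - b) \<le> norm (a - b) / cl" by (rule dn_upper)
  ultimately show ?thesis by linarith
qed

lemma dn_cont: "continuous_on S dn"
proof -
  have "(1 / cl)-lipschitz_on S dn"
    by (rule lipschitz_onI) (use dn_lip cl(1) in \<open>auto simp: dist_norm dist_real_def\<close>)
  then show ?thesis by (rule lipschitz_on_continuous_on)
qed

lemma dn_meas[measurable]: "dn \<in> borel_measurable borel"
  by (rule borel_measurable_continuous_onI[OF dn_cont])

end

context prox_loc begin

lemma pm_meas[measurable]: "pm \<in> borel_measurable borel"
  by (rule borel_measurable_continuous_onI[OF pm_cont])

lemma smd_sd:
  assumes "x0 \<in> subdiff_dom X \<omega>"
  shows "smd X \<omega> \<omega>' \<gamma> G x0 \<xi> k w \<in> subdiff_dom X \<omega>"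
  by (cases k) (auto simp: prox_eq pm_sd assms)

end

locale smd_loc = prox_loc nrm X \<omega> \<omega>' \<mu>
  for nrm :: "'a::euclidean_space \<Rightarrow> real" and X \<omega> \<omega>' \<mu> +
  fixes M :: "'w measure" and P :: "'b measure" and \<xi> :: "nat \<Rightarrow> 'w \<Rightarrow> 'b"
    and g :: "'a \<Rightarrow> 'b \<Rightarrow> real" and G :: "'a \<Rightarrow> 'b \<Rightarrow> 'a"
    and f :: "'a \<Rightarrow> real" and f' :: "'a \<Rightarrow> 'a"
    and L M1 M2 \<gamma> :: real and x\<omega> xs :: 'a
  assumes x\<omega>: "x\<omega> \<in> X" "\<forall>y\<in>X. \<omega> x\<omega> \<le> \<omega> y"
    and prob: "prob_space M"
    and \<xi>_meas: "\<forall>t\<ge>1. \<xi> t \<in> measurable M P"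
    and \<xi>_dist: "\<forall>t\<ge>1. distr M P (\<xi> t) = P"
    and \<xi>_indep: "prob_space.indep_vars M (\<lambda>_. P) \<xi> {1..}"
    and g_meas: "(\<lambda>(x, z). g x z) \<in> borel_measurable (borel \<Otimes>\<^sub>M P)"
    and G_meas: "(\<lambda>(x, z). G x z) \<in> borel_measurable (borel \<Otimes>\<^sub>M P)"
    and f_def: "\<forall>x\<in>X. integrable P (g x) \<and> f x = (\<integral>z. g x z \<partial>P)"
    and f'_def: "\<forall>x\<in>X. integrable P (G x) \<and> f' x = (\<integral>z. G x z \<partial>P)"
    and f'_sub: "\<forall>x\<in>X. is_subgrad X f x (f' x)"
    and A1: "\<forall>x\<in>X. dual_norm nrm (f' x) \<le> L"
    and M_nonneg: "L \<ge> 0" "M1 \<ge> 0" "M2 \<ge> 0"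
    and A3a: "\<forall>x\<in>X. (\<integral>\<^sup>+ z. ennreal ((g x z - f x)\<^sup>2) \<partial>P) \<le> ennreal (M1\<^sup>2)"
    and A3b: "\<forall>x\<in>X. (\<integral>\<^sup>+ z. ennreal ((dual_norm nrm (G x z - f' x))\<^sup>2) \<partial>P) \<le> ennreal (M2\<^sup>2)"
    and xs: "xs \<in> X" "\<forall>y\<in>X. f xs \<le> f y"
begin

definition "y k w = smd X \<omega> \<omega>' \<gamma> G x\<omega> \<xi> k w"
definition "F k a = smd X \<omega> \<omega>' \<gamma> G x\<omega> (\<lambda>i a. a i) k a"
definition "Y k w = restrict (\<lambda>i. \<xi> i w) {1..k}"
abbreviation "PP k \<equiv> PiM {1..k} (\<lambda>_. P)"

lemma x\<omega>_sd: "x\<omega> \<in> subdiff_dom X \<omega>" using W_min(2)[OF x\<omega> x\<omega>(1)] .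

lemma F_sd: "F k a \<in> subdiff_dom X \<omega>" unfolding F_def by (rule smd_sd[OF x\<omega>_sd])
lemma y_sd: "y k w \<in> subdiff_dom X \<omega>" unfolding y_def by (rule smd_sd[OF x\<omega>_sd])
lemma F_X: "F k a \<in> X" using F_sd sd_X by blast
lemma y_X: "y k w \<in> X" using y_sd sd_X by blast

lemma y_eq: "j \<le> k \<Longrightarrow> y j w = F j (Y k w)"
  unfolding y_def F_def Y_def by (rule smd_cong) auto

lemma y_Suc: "y (Suc k) w = prox X \<omega> \<omega>' (y k w) (\<gamma> *\<^sub>R G (y k w) (\<xi> (Suc k) w))"
  by (simp add: y_def)

lemma \<xi>_m[measurable]: "t \<ge> 1 \<Longrightarrow> \<xi> t \<in> measurable M P" using \<xi>_meas by blast

lemma \<xi>_Suc[measurable]: "\<xi> (Suc k) \<in> measurable M P" using \<xi>_meas by simp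

lemma Y_meas[measurable]: "Y k \<in> measurable M (PP k)"
  unfolding Y_def by (rule measurable_restrict) auto

lemma F_meas: "j \<le> k \<Longrightarrow> F j \<in> borel_measurable (PP k)"
proof (induction j)
  case 0 then show ?case by (simp add: F_def)
next
  case (Suc j)
  then have Fj: "F j \<in> borel_measurable (PP k)" by simp
  have comp: "(\<lambda>a. a (Suc j)) \<in> measurable (PP k) P"
    by (rule measurable_component_singleton) (use Suc.prems in auto)
  have pair: "(\<lambda>a. (F j a, a (Suc j))) \<in> measurable (PP k) (borel \<Otimes>\<^sub>M P)"
    by (rule measurable_Pair[OF Fj comp])
  have Gm: "(\<lambda>a. G (F j a) (a (Suc j))) \<in> borel_measurable (PP k)"
    using measurable_comp[OF pair G_meas] by (simp add: comp_def)
  have om: "(\<lambda>a. \<omega>' (F j a)) \<in> borel_measurable (PP k)"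
    by (rule meas_cont_comp[OF Fj F_sd \<omega>'_cont])
  have eq: "F (Suc j) = (\<lambda>a. pm (\<gamma> *\<^sub>R G (F j a) (a (Suc j)) - \<omega>' (F j a)))"
    by (simp add: fun_eq_iff F_def prox_eq)
  show ?case unfolding eq
    by (rule measurable_comp[OF _ pm_meas, unfolded comp_def]) (intro borel_measurable_diff borel_measurable_scaleR Gm om measurable_const, simp)
qed

lemma y_meas[measurable]: "y k \<in> borel_measurable M"
proof -
  have "y k = (\<lambda>w. F k (Y k w))" using y_eq by auto
  then show ?thesis using measurable_comp[OF Y_meas F_meas[of k k]] by (simp add: comp_def)
qed

end



sublocale smd_loc \<subseteq> Mp: prob_space M by (rule prob)

context smd_loc begin

lemma P_prob: "prob_space P"
proof -
  have "prob_space (distr M P (\<xi> 1))" by (rule Mp.prob_space_distr) simp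
  then show ?thesis using \<xi>_dist by simp
qed

abbreviation "QQ k \<equiv> PiM {Suc k} (\<lambda>_. P)"
definition "Z k w = restrict (\<lambda>i. \<xi> i w) {Suc k}"

lemma Z_meas[measurable]: "Z k \<in> measurable M (QQ k)"
  unfolding Z_def by (rule measurable_restrict) auto

lemma Z_Suc: "Z k w (Suc k) = \<xi> (Suc k) w" by (simp add: Z_def)

lemma indep_k: "Mp.indep_var (PP k) (Y k) (QQ k) (Z k)"
proof -
  have ind: "Mp.indep_vars (\<lambda>_. P) \<xi> {1..}" using \<xi>_indep by simp
  show ?thesis unfolding Y_def Z_def
    by (rule Mp.indep_var_restrict[OF ind]) auto
qed

lemma distr_eq: "distr M (PP k) (Y k) \<Otimes>\<^sub>M distr M (QQ k) (Z k) = distr M (PP k \<Otimes>\<^sub>M QQ k) (\<lambda>w. (Y k w, Z k w))"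
  using indep_k[of k] unfolding Mp.indep_var_distribution_eq by simp

lemma pair_sets: "sets (distr M (PP k) (Y k) \<Otimes>\<^sub>M distr M (QQ k) (Z k)) = sets (PP k \<Otimes>\<^sub>M QQ k)"
  by (rule sets_pair_measure_cong) simp_all

lemma comp_meas: "(\<lambda>b. b (Suc k)) \<in> measurable (QQ k) P"
  by (rule measurable_component_singleton) simp

lemma H'_meas:
  assumes H: "H \<in> borel_measurable (PP k \<Otimes>\<^sub>M P)"
  shows "(\<lambda>p. H (fst p, snd p (Suc k))) \<in> borel_measurable (PP k \<Otimes>\<^sub>M QQ k)"
proof -
  have "(\<lambda>p. (fst p, snd p (Suc k))) \<in> measurable (PP k \<Otimes>\<^sub>M QQ k) (PP k \<Otimes>\<^sub>M P)"
    by (rule measurable_Pair[OF measurable_fst measurable_compose[OF measurable_snd comp_meas]])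
  from measurable_comp[OF this H] show ?thesis by (simp add: comp_def)
qed

lemma expnn:
  assumes H: "H \<in> borel_measurable (PP k \<Otimes>\<^sub>M P)"
  shows "(\<integral>\<^sup>+w. H (Y k w, \<xi> (Suc k) w) \<partial>M) = (\<integral>\<^sup>+w. (\<integral>\<^sup>+z. H (Y k w, z) \<partial>P) \<partial>M)"
proof -
  interpret Pp: prob_space P by (rule P_prob)
  let ?D1 = "distr M (PP k) (Y k)" and ?D2 = "distr M (QQ k) (Z k)"
  interpret D2: prob_space ?D2 by (rule Mp.prob_space_distr[OF Z_meas])
  let ?H = "\<lambda>p. H (fst p, snd p (Suc k))"
  have Hm: "?H \<in> borel_measurable (PP k \<Otimes>\<^sub>M QQ k)" by (rule H'_meas[OF H])
  have H': "?H \<in> borel_measurable (?D1 \<Otimes>\<^sub>M ?D2)"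
    using Hm measurable_cong_sets[OF pair_sets refl] by blast
  have pm: "(\<lambda>w. (Y k w, Z k w)) \<in> measurable M (PP k \<Otimes>\<^sub>M QQ k)" by (rule measurable_Pair[OF Y_meas Z_meas])
  have "(\<integral>\<^sup>+w. H (Y k w, \<xi> (Suc k) w) \<partial>M) = (\<integral>\<^sup>+w. ?H (Y k w, Z k w) \<partial>M)" by (simp add: Z_Suc)
  also have "\<dots> = integral\<^sup>N (distr M (PP k \<Otimes>\<^sub>M QQ k) (\<lambda>w. (Y k w, Z k w))) ?H"
    by (rule nn_integral_distr[symmetric, OF pm]) (use Hm in simp)
  also have "\<dots> = integral\<^sup>N (?D1 \<Otimes>\<^sub>M ?D2) ?H" by (simp only: distr_eq)
  also have "\<dots> = (\<integral>\<^sup>+ a. \<integral>\<^sup>+ b. ?H (a, b) \<partial>?D2 \<partial>?D1)" by (rule D2.nn_integral_fst[symmetric, OF H'])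
  also have "\<dots> = (\<integral>\<^sup>+ a. \<integral>\<^sup>+ z. H (a, z) \<partial>P \<partial>?D1)"
  proof (rule nn_integral_cong)
    fix a assume a: "a \<in> space ?D1"
    have Ha: "(\<lambda>z. H (a, z)) \<in> borel_measurable P" using measurable_Pair2[OF H] a by simp
    have "(\<integral>\<^sup>+ b. ?H (a, b) \<partial>?D2) = (\<integral>\<^sup>+ b. H (a, b (Suc k)) \<partial>?D2)" by simp
    also have "\<dots> = (\<integral>\<^sup>+ w. H (a, Z k w (Suc k)) \<partial>M)"
      by (rule nn_integral_distr) (use measurable_compose[OF comp_meas Ha] in simp_all)
    also have "\<dots> = (\<integral>\<^sup>+ w. H (a, \<xi> (Suc k) w) \<partial>M)" by (simp add: Z_Suc)
    also have "\<dots> = (\<integral>\<^sup>+ z. H (a, z) \<partial>distr M P (\<xi> (Suc k)))"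
      by (rule nn_integral_distr[symmetric]) (use Ha in simp_all)
    also have "\<dots> = (\<integral>\<^sup>+ z. H (a, z) \<partial>P)" using \<xi>_dist by simp
    finally show "(\<integral>\<^sup>+ b. ?H (a, b) \<partial>?D2) = (\<integral>\<^sup>+ z. H (a, z) \<partial>P)" .
  qed
  also have "\<dots> = (\<integral>\<^sup>+w. (\<integral>\<^sup>+z. H (Y k w, z) \<partial>P) \<partial>M)"
    by (rule nn_integral_distr[OF Y_meas]) (use Pp.borel_measurable_nn_integral_fst[OF H] in simp)
  finally show ?thesis .
qed

lemma expint:
  fixes H :: "(nat \<Rightarrow> 'b) \<times> 'b \<Rightarrow> real"
  assumes H: "H \<in> borel_measurable (PP k \<Otimes>\<^sub>M P)"
    and int: "integrable M (\<lambda>w. H (Y k w, \<xi> (Suc k) w))"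
  shows "(\<integral>w. H (Y k w, \<xi> (Suc k) w) \<partial>M) = (\<integral>w. (\<integral>z. H (Y k w, z) \<partial>P) \<partial>M)"
proof -
  interpret Pp: prob_space P by (rule P_prob)
  let ?D1 = "distr M (PP k) (Y k)" and ?D2 = "distr M (QQ k) (Z k)"
  interpret D1: prob_space ?D1 by (rule Mp.prob_space_distr[OF Y_meas])
  interpret D2: prob_space ?D2 by (rule Mp.prob_space_distr[OF Z_meas])
  interpret DP: pair_sigma_finite ?D1 ?D2
    by (intro pair_sigma_finite.intro D1.sigma_finite_measure_axioms D2.sigma_finite_measure_axioms)
  let ?H = "\<lambda>p. H (fst p, snd p (Suc k))"
  have Hm: "?H \<in> borel_measurable (PP k \<Otimes>\<^sub>M QQ k)" by (rule H'_meas[OF H])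
  have pm: "(\<lambda>w. (Y k w, Z k w)) \<in> measurable M (PP k \<Otimes>\<^sub>M QQ k)" by (rule measurable_Pair[OF Y_meas Z_meas])
  have int': "integrable M (\<lambda>w. ?H (Y k w, Z k w))" using int by (simp add: Z_Suc)
  have "integrable (distr M (PP k \<Otimes>\<^sub>M QQ k) (\<lambda>w. (Y k w, Z k w))) ?H"
    using integrable_distr_eq[OF pm Hm] int' by simp
  then have iD: "integrable (?D1 \<Otimes>\<^sub>M ?D2) ?H" by (simp only: distr_eq)
  have "(\<integral>w. H (Y k w, \<xi> (Suc k) w) \<partial>M) = (\<integral>w. ?H (Y k w, Z k w) \<partial>M)" by (simp add: Z_Suc)
  also have "\<dots> = integral\<^sup>L (distr M (PP k \<Otimes>\<^sub>M QQ k) (\<lambda>w. (Y k w, Z k w))) ?H"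
    by (rule integral_distr[symmetric, OF pm Hm])
  also have "\<dots> = integral\<^sup>L (?D1 \<Otimes>\<^sub>M ?D2) ?H" by (simp only: distr_eq)
  also have "\<dots> = (\<integral> a. \<integral> b. ?H (a, b) \<partial>?D2 \<partial>?D1)" by (rule DP.integral_fst'[symmetric, OF iD])
  also have "\<dots> = (\<integral> a. \<integral> z. H (a, z) \<partial>P \<partial>?D1)"
  proof (rule Bochner_Integration.integral_cong[OF refl])
    fix a assume a: "a \<in> space ?D1"
    have Ha: "(\<lambda>z. H (a, z)) \<in> borel_measurable P" using measurable_Pair2[OF H] a by simp
    have "(\<integral> b. ?H (a, b) \<partial>?D2) = (\<integral> b. H (a, b (Suc k)) \<partial>?D2)" by simp
    also have "\<dots> = (\<integral> w. H (a, Z k w (Suc k)) \<partial>M)"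
      by (rule integral_distr) (use measurable_compose[OF comp_meas Ha] in simp_all)
    also have "\<dots> = (\<integral> w. H (a, \<xi> (Suc k) w) \<partial>M)" by (simp add: Z_Suc)
    also have "\<dots> = (\<integral> z. H (a, z) \<partial>distr M P (\<xi> (Suc k)))"
      by (rule integral_distr[symmetric]) (use Ha in simp_all)
    also have "\<dots> = (\<integral> z. H (a, z) \<partial>P)" using \<xi>_dist by simp
    finally show "(\<integral> b. ?H (a, b) \<partial>?D2) = (\<integral> z. H (a, z) \<partial>P)" .
  qed
  also have "\<dots> = (\<integral>w. (\<integral>z. H (Y k w, z) \<partial>P) \<partial>M)"
  proof -
    have Hc: "(\<lambda>(x, y). H (x, y)) \<in> borel_measurable (PP k \<Otimes>\<^sub>M P)" unfolding case_prod_eta by (rule H)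
    show ?thesis by (rule integral_distr[OF Y_meas Pp.borel_measurable_lebesgue_integral[OF Hc]])
  qed
  finally show ?thesis .
qed

end



context smd_loc begin

definition "fp x = (\<integral>z. G x z \<partial>P)"
definition "fg x = (\<integral>z. g x z \<partial>P)"

lemma fp_meas[measurable]: "fp \<in> borel_measurable borel"
proof -
  interpret Pp: prob_space P by (rule P_prob)
  show ?thesis unfolding fp_def by (rule Pp.borel_measurable_lebesgue_integral[OF G_meas])
qed

lemma fg_meas[measurable]: "fg \<in> borel_measurable borel"
proof -
  interpret Pp: prob_space P by (rule P_prob)
  show ?thesis unfolding fg_def by (rule Pp.borel_measurable_lebesgue_integral[OF g_meas])
qed

lemma fp_eq: "x \<in> X \<Longrightarrow> fp x = f' x" using f'_def by (simp add: fp_def)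
lemma fg_eq: "x \<in> X \<Longrightarrow> fg x = f x" using f_def by (simp add: fg_def)

lemma F_pair_meas: "j \<le> k \<Longrightarrow> (\<lambda>p. (F j (fst p), snd p)) \<in> measurable (PP k \<Otimes>\<^sub>M P) (borel \<Otimes>\<^sub>M P)"
  by (rule measurable_Pair[OF measurable_compose[OF measurable_fst F_meas] measurable_snd])

lemma expnn_y:
  assumes \<phi>: "(\<lambda>(x, z). \<phi> x z) \<in> borel_measurable (borel \<Otimes>\<^sub>M P)"
  shows "(\<integral>\<^sup>+w. \<phi> (y k w) (\<xi> (Suc k) w) \<partial>M) = (\<integral>\<^sup>+w. (\<integral>\<^sup>+z. \<phi> (y k w) z \<partial>P) \<partial>M)"
proof -
  let ?H = "\<lambda>p. \<phi> (F k (fst p)) (snd p)"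
  have H: "?H \<in> borel_measurable (PP k \<Otimes>\<^sub>M P)"
    using measurable_comp[OF F_pair_meas[of k k] \<phi>] by (simp add: comp_def case_prod_beta)
  from expnn[OF H] show ?thesis by (simp add: y_eq[of k k])
qed

lemma nn_const_le: "(\<And>w. w \<in> space M \<Longrightarrow> u w \<le> ennreal c) \<Longrightarrow> (\<integral>\<^sup>+w. u w \<partial>M) \<le> ennreal c"
proof -
  assume h: "\<And>w. w \<in> space M \<Longrightarrow> u w \<le> ennreal c"
  have "(\<integral>\<^sup>+w. u w \<partial>M) \<le> (\<integral>\<^sup>+w. ennreal c \<partial>M)" by (rule nn_integral_mono) (rule h)
  also have "\<dots> = ennreal c" by (simp add: Mp.emeasure_space_1)
  finally show ?thesis .
qed

definition "Gk k w = G (y k w) (\<xi> (Suc k) w)"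
definition "Dk k w = dn (Gk k w - fp (y k w))"
definition "dl k w = g (y k w) (\<xi> (Suc k) w) - fg (y k w)"

lemma Gk_meas[measurable]: "Gk k \<in> borel_measurable M"
proof -
  have "(\<lambda>w. (y k w, \<xi> (Suc k) w)) \<in> measurable M (borel \<Otimes>\<^sub>M P)"
    by (rule measurable_Pair[OF y_meas \<xi>_Suc])
  from measurable_comp[OF this G_meas] show ?thesis unfolding Gk_def by (simp add: comp_def)
qed

lemma gk_meas[measurable]: "(\<lambda>w. g (y k w) (\<xi> (Suc k) w)) \<in> borel_measurable M"
proof -
  have "(\<lambda>w. (y k w, \<xi> (Suc k) w)) \<in> measurable M (borel \<Otimes>\<^sub>M P)"
    by (rule measurable_Pair[OF y_meas \<xi>_Suc])
  from measurable_comp[OF this g_meas] show ?thesis by (simp add: comp_def)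
qed

lemma Dk_meas[measurable]: "Dk k \<in> borel_measurable M"
  unfolding Dk_def by measurable

lemma dl_meas[measurable]: "dl k \<in> borel_measurable M"
  unfolding dl_def by measurable

lemma Dk_sq_nn: "(\<integral>\<^sup>+w. ennreal ((Dk k w)\<^sup>2) \<partial>M) \<le> ennreal (M2\<^sup>2)"
proof -
  have \<phi>: "(\<lambda>(x, z). ennreal ((dn (G x z - fp x))\<^sup>2)) \<in> borel_measurable (borel \<Otimes>\<^sub>M P)"
    using G_meas by measurable
  have "(\<integral>\<^sup>+w. ennreal ((Dk k w)\<^sup>2) \<partial>M) = (\<integral>\<^sup>+w. (\<integral>\<^sup>+z. ennreal ((dn (G (y k w) z - fp (y k w)))\<^sup>2) \<partial>P) \<partial>M)"
    using expnn_y[OF \<phi>, of k] by (simp add: Dk_def Gk_def)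
  also have "\<dots> \<le> ennreal (M2\<^sup>2)"
    by (rule nn_const_le) (use A3b y_X fp_eq in auto)
  finally show ?thesis .
qed

lemma dl_sq_nn: "(\<integral>\<^sup>+w. ennreal ((dl k w)\<^sup>2) \<partial>M) \<le> ennreal (M1\<^sup>2)"
proof -
  have \<phi>: "(\<lambda>(x, z). ennreal ((g x z - fg x)\<^sup>2)) \<in> borel_measurable (borel \<Otimes>\<^sub>M P)"
    using g_meas by measurable
  have "(\<integral>\<^sup>+w. ennreal ((dl k w)\<^sup>2) \<partial>M) = (\<integral>\<^sup>+w. (\<integral>\<^sup>+z. ennreal ((g (y k w) z - fg (y k w))\<^sup>2) \<partial>P) \<partial>M)"
    using expnn_y[OF \<phi>, of k] by (simp add: dl_def)
  also have "\<dots> \<le> ennreal (M1\<^sup>2)"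
    by (rule nn_const_le) (use A3a y_X fg_eq in auto)
  finally show ?thesis .
qed

lemma sq_integrable:
  fixes u :: "'w \<Rightarrow> real"
  assumes "u \<in> borel_measurable M" "(\<integral>\<^sup>+w. ennreal ((u w)\<^sup>2) \<partial>M) \<le> ennreal c"
  shows "integrable M (\<lambda>w. (u w)\<^sup>2)" "integrable M u"
proof -
  show i2: "integrable M (\<lambda>w. (u w)\<^sup>2)"
  proof (rule Bochner_Integration.integrableI_bounded)
    show "(\<lambda>w. (u w)\<^sup>2) \<in> borel_measurable M" using assms(1) by measurable
    have "(\<integral>\<^sup>+w. ennreal (norm ((u w)\<^sup>2)) \<partial>M) = (\<integral>\<^sup>+w. ennreal ((u w)\<^sup>2) \<partial>M)" by simp
    also have "\<dots> < \<infinity>" using assms(2) by (simp add: order_le_less_trans)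
    finally show "(\<integral>\<^sup>+w. ennreal (norm ((u w)\<^sup>2)) \<partial>M) < \<infinity>" .
  qed
  show "integrable M u"
  proof (rule Bochner_Integration.integrable_bound[OF _ assms(1)])
    show "integrable M (\<lambda>w. 1 + (u w)\<^sup>2)" using i2 by simp
    show "AE w in M. norm (u w) \<le> norm (1 + (u w)\<^sup>2)"
    proof (intro AE_I2)
      fix w
      have e: "(\<bar>u w\<bar> - 1/2)\<^sup>2 = (u w)\<^sup>2 - \<bar>u w\<bar> + 1/4"
        by (simp add: power2_eq_square algebra_simps abs_mult_self_eq)
      have "0 \<le> (\<bar>u w\<bar> - 1/2)\<^sup>2" by simp
      then have "\<bar>u w\<bar> \<le> 1 + (u w)\<^sup>2" using e by linarith
      then show "norm (u w) \<le> norm (1 + (u w)\<^sup>2)" by simp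
    qed
  qed
qed

lemma Dk_int: "integrable M (\<lambda>w. (Dk k w)\<^sup>2)" "integrable M (Dk k)"
  using sq_integrable[OF Dk_meas Dk_sq_nn] by auto

lemma dl_int: "integrable M (\<lambda>w. (dl k w)\<^sup>2)" "integrable M (dl k)"
  using sq_integrable[OF dl_meas dl_sq_nn] by auto

lemma dl_sq_le: "(\<integral>w. (dl k w)\<^sup>2 \<partial>M) \<le> M1\<^sup>2"
proof -
  have "ennreal (\<integral>w. (dl k w)\<^sup>2 \<partial>M) = (\<integral>\<^sup>+w. ennreal ((dl k w)\<^sup>2) \<partial>M)"
    by (rule nn_integral_eq_integral[symmetric]) (use dl_int in auto)
  also have "\<dots> \<le> ennreal (M1\<^sup>2)" by (rule dl_sq_nn)
  finally show ?thesis by (subst (asm) ennreal_le_iff) simp_all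
qed

lemma Dk_sq_le: "(\<integral>w. (Dk k w)\<^sup>2 \<partial>M) \<le> M2\<^sup>2"
proof -
  have "ennreal (\<integral>w. (Dk k w)\<^sup>2 \<partial>M) = (\<integral>\<^sup>+w. ennreal ((Dk k w)\<^sup>2) \<partial>M)"
    by (rule nn_integral_eq_integral[symmetric]) (use Dk_int in auto)
  also have "\<dots> \<le> ennreal (M2\<^sup>2)" by (rule Dk_sq_nn)
  finally show ?thesis by (subst (asm) ennreal_le_iff) simp_all
qed

end



context smd_loc begin

lemma R0_ex: "\<exists>R0\<ge>0. \<forall>u\<in>X. nrm (u - xs) \<le> R0"
proof -
  obtain B where B: "\<forall>u\<in>X. norm u \<le> B" using X(3) by (auto simp: bounded_iff)
  obtain C where C: "C \<ge> 0" "\<And>v. nrm v \<le> C * norm v" using upper by blast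
  have "nrm (u - xs) \<le> C * (B + B)" if "u \<in> X" for u
  proof -
    have "nrm (u - xs) \<le> C * norm (u - xs)" by (rule C(2))
    also have "\<dots> \<le> C * (norm u + norm xs)" using C(1) by (intro mult_left_mono norm_triangle_ineq4) 
    also have "\<dots> \<le> C * (B + B)" using C(1) B that xs(1) by (intro mult_left_mono add_mono) auto
    finally show ?thesis .
  qed
  moreover have "0 \<le> C * (B + B)" using B xs(1) C(1) by (meson add_nonneg_nonneg norm_ge_zero order_trans zero_le_mult_iff)
  ultimately show ?thesis by blast
qed

definition "R0 = (SOME R0. R0 \<ge> 0 \<and> (\<forall>u\<in>X. nrm (u - xs) \<le> R0))"
lemma R0: "R0 \<ge> 0" "u \<in> X \<Longrightarrow> nrm (u - xs) \<le> R0"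
  using someI_ex[OF R0_ex] unfolding R0_def[symmetric] by auto

definition "Bk k w = (Gk k w - fp (y k w)) \<bullet> (y k w - xs)"

lemma Bk_meas[measurable]: "Bk k \<in> borel_measurable M"
  unfolding Bk_def by measurable

lemma Bk_int: "integrable M (Bk k)"
proof (rule Bochner_Integration.integrable_bound[OF _ Bk_meas])
  show "integrable M (\<lambda>w. R0 * Dk k w)" using Dk_int by simp
  show "AE w in M. norm (Bk k w) \<le> norm (R0 * Dk k w)"
  proof (intro AE_I2)
    fix w
    have "\<bar>Bk k w\<bar> \<le> Dk k w * nrm (y k w - xs)" unfolding Bk_def Dk_def by (rule dn_abs_inner)
    also have "\<dots> \<le> Dk k w * R0" using R0(2)[OF y_X] dn_nonneg by (simp add: Dk_def mult_left_mono)
    finally show "norm (Bk k w) \<le> norm (R0 * Dk k w)" using R0(1) dn_nonneg by (simp add: Dk_def abs_mult mult.commute)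
  qed
qed

lemma Bk_zero: "(\<integral>w. Bk k w \<partial>M) = 0"
proof -
  interpret Pp: prob_space P by (rule P_prob)
  have \<phi>: "(\<lambda>(x, z). (G x z - fp x) \<bullet> (x - xs)) \<in> borel_measurable (borel \<Otimes>\<^sub>M P)"
    using G_meas by measurable
  let ?H = "\<lambda>p. (G (F k (fst p)) (snd p) - fp (F k (fst p))) \<bullet> (F k (fst p) - xs)"
  have H: "?H \<in> borel_measurable (PP k \<Otimes>\<^sub>M P)"
    using measurable_comp[OF F_pair_meas[of k k] \<phi>] by (simp add: comp_def case_prod_beta)
  have eq: "Bk k w = ?H (Y k w, \<xi> (Suc k) w)" for w by (simp add: Bk_def Gk_def y_eq[of k k])
  have int: "integrable M (\<lambda>w. ?H (Y k w, \<xi> (Suc k) w))" using Bk_int[of k] unfolding eq by simp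
  have "(\<integral>w. Bk k w \<partial>M) = (\<integral>w. (\<integral>z. ?H (Y k w, z) \<partial>P) \<partial>M)"
    unfolding eq by (rule expint[OF H int])
  also have "\<dots> = (\<integral>w. 0 \<partial>M)"
  proof (rule Bochner_Integration.integral_cong[OF refl])
    fix w
    let ?x = "F k (Y k w)"
    have iG: "integrable P (G ?x)" using f'_def F_X by blast
    have "(\<integral>z. ?H (Y k w, z) \<partial>P) = (\<integral>z. G ?x z \<bullet> (?x - xs) - fp ?x \<bullet> (?x - xs) \<partial>P)"
      by (simp add: inner_diff_left)
    also have "\<dots> = (\<integral>z. G ?x z \<bullet> (?x - xs) \<partial>P) - fp ?x \<bullet> (?x - xs)"
      using iG by (subst Bochner_Integration.integral_diff) (auto simp: Pp.prob_space)
    also have "\<dots> = 0" using iG by (simp add: fp_def)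
    finally show "(\<integral>z. ?H (Y k w, z) \<partial>P) = 0" .
  qed
  finally show ?thesis by simp
qed

lemma Gk_sq:
  "integrable M (\<lambda>w. (dn (Gk k w))\<^sup>2)" "(\<integral>w. (dn (Gk k w))\<^sup>2 \<partial>M) \<le> 2 * (M2\<^sup>2 + L\<^sup>2)"
proof -
  have pw: "(dn (Gk k w))\<^sup>2 \<le> 2 * (Dk k w)\<^sup>2 + 2 * L\<^sup>2" for w
  proof -
    have "dn (Gk k w) \<le> Dk k w + dn (fp (y k w))"
      using dn_tri[of "Gk k w - fp (y k w)" "fp (y k w)"] by (simp add: Dk_def)
    also have "\<dots> \<le> Dk k w + L" using A1 y_X fp_eq by auto
    finally have a: "dn (Gk k w) \<le> Dk k w + L" .
    have "(dn (Gk k w))\<^sup>2 \<le> (Dk k w + L)\<^sup>2" using a dn_nonneg by (intro power_mono) auto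
    also have "\<dots> \<le> 2 * (Dk k w)\<^sup>2 + 2 * L\<^sup>2"
    proof -
      have "0 \<le> (Dk k w - L)\<^sup>2" by simp
      then show ?thesis by (simp add: power2_eq_square algebra_simps)
    qed
    finally show ?thesis .
  qed
  have i2: "integrable M (\<lambda>w. 2 * (Dk k w)\<^sup>2 + 2 * L\<^sup>2)" using Dk_int by simp
  show i1: "integrable M (\<lambda>w. (dn (Gk k w))\<^sup>2)"
  proof (rule Bochner_Integration.integrable_bound[OF i2])
    show "(\<lambda>w. (dn (Gk k w))\<^sup>2) \<in> borel_measurable M" by measurable
    show "AE w in M. norm ((dn (Gk k w))\<^sup>2) \<le> norm (2 * (Dk k w)\<^sup>2 + 2 * L\<^sup>2)"
      using pw by (intro AE_I2) (smt (verit) real_norm_def zero_le_power2)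
  qed
  have "(\<integral>w. (dn (Gk k w))\<^sup>2 \<partial>M) \<le> (\<integral>w. 2 * (Dk k w)\<^sup>2 + 2 * L\<^sup>2 \<partial>M)"
    by (rule integral_mono[OF i1 i2 pw])
  also have "\<dots> = 2 * (\<integral>w. (Dk k w)\<^sup>2 \<partial>M) + 2 * L\<^sup>2"
    using Dk_int by (simp add: Mp.prob_space)
  also have "\<dots> \<le> 2 * (M2\<^sup>2 + L\<^sup>2)" using Dk_sq_le[of k] by simp
  finally show "(\<integral>w. (dn (Gk k w))\<^sup>2 \<partial>M) \<le> 2 * (M2\<^sup>2 + L\<^sup>2)" .
qed

lemma dl_prod_int: "integrable M (\<lambda>w. dl j w * dl k w)"
proof (rule Bochner_Integration.integrable_bound)
  show "integrable M (\<lambda>w. (dl j w)\<^sup>2 + (dl k w)\<^sup>2)" using dl_int by simp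
  show "(\<lambda>w. dl j w * dl k w) \<in> borel_measurable M" by measurable
  show "AE w in M. norm (dl j w * dl k w) \<le> norm ((dl j w)\<^sup>2 + (dl k w)\<^sup>2)"
  proof (intro AE_I2)
    fix w
    have "0 \<le> (\<bar>dl j w\<bar> - \<bar>dl k w\<bar>)\<^sup>2" by simp
    moreover have "(\<bar>dl j w\<bar> - \<bar>dl k w\<bar>)\<^sup>2 = (dl j w)\<^sup>2 + (dl k w)\<^sup>2 - 2 * \<bar>dl j w\<bar> * \<bar>dl k w\<bar>"
      by (simp add: power2_diff)
    ultimately have "2 * (\<bar>dl j w\<bar> * \<bar>dl k w\<bar>) \<le> (dl j w)\<^sup>2 + (dl k w)\<^sup>2" by linarith
    moreover have "0 \<le> \<bar>dl j w\<bar> * \<bar>dl k w\<bar>" by simp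
    ultimately have "\<bar>dl j w\<bar> * \<bar>dl k w\<bar> \<le> (dl j w)\<^sup>2 + (dl k w)\<^sup>2" by linarith
    then show "norm (dl j w * dl k w) \<le> norm ((dl j w)\<^sup>2 + (dl k w)\<^sup>2)" by (simp add: abs_mult)
  qed
qed

lemma dl_cross: assumes jk: "j < k" shows "(\<integral>w. dl j w * dl k w \<partial>M) = 0"
proof -
  interpret Pp: prob_space P by (rule P_prob)
  have jk': "j \<le> k" using jk by simp
  have comp: "(\<lambda>a. a (Suc j)) \<in> measurable (PP k) P"
    by (rule measurable_component_singleton) (use jk in auto)
  have pj: "(\<lambda>a. (F j a, a (Suc j))) \<in> measurable (PP k) (borel \<Otimes>\<^sub>M P)"
    by (rule measurable_Pair[OF F_meas[OF jk'] comp])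
  have psi: "(\<lambda>a. g (F j a) (a (Suc j)) - fg (F j a)) \<in> borel_measurable (PP k)"
  proof -
    have "(\<lambda>a. g (F j a) (a (Suc j))) \<in> borel_measurable (PP k)"
      using measurable_comp[OF pj g_meas] by (simp add: comp_def)
    moreover have "(\<lambda>a. fg (F j a)) \<in> borel_measurable (PP k)"
      using measurable_comp[OF F_meas[OF jk'] fg_meas] by (simp add: comp_def)
    ultimately show ?thesis by measurable
  qed
  have \<phi>: "(\<lambda>(x, z). g x z - fg x) \<in> borel_measurable (borel \<Otimes>\<^sub>M P)"
    using g_meas by measurable
  have phi2: "(\<lambda>p. g (F k (fst p)) (snd p) - fg (F k (fst p))) \<in> borel_measurable (PP k \<Otimes>\<^sub>M P)"
    using measurable_comp[OF F_pair_meas[of k k] \<phi>] by (simp add: comp_def case_prod_beta)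
  let ?H = "\<lambda>p. (g (F j (fst p)) (fst p (Suc j)) - fg (F j (fst p))) * (g (F k (fst p)) (snd p) - fg (F k (fst p)))"
  have H: "?H \<in> borel_measurable (PP k \<Otimes>\<^sub>M P)"
    using measurable_compose[OF measurable_fst psi] phi2 by measurable
  have eq: "dl j w * dl k w = ?H (Y k w, \<xi> (Suc k) w)" for w
  proof -
    have "Y k w (Suc j) = \<xi> (Suc j) w" using jk by (simp add: Y_def)
    then show ?thesis by (simp add: dl_def y_eq[OF jk'] y_eq[of k k])
  qed
  have int: "integrable M (\<lambda>w. ?H (Y k w, \<xi> (Suc k) w))" using dl_prod_int[of j k] unfolding eq by simp
  have "(\<integral>w. dl j w * dl k w \<partial>M) = (\<integral>w. (\<integral>z. ?H (Y k w, z) \<partial>P) \<partial>M)"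
    unfolding eq by (rule expint[OF H int])
  also have "\<dots> = (\<integral>w. 0 \<partial>M)"
  proof (rule Bochner_Integration.integral_cong[OF refl])
    fix w
    let ?x = "F k (Y k w)" and ?c = "g (F j (Y k w)) (Y k w (Suc j)) - fg (F j (Y k w))"
    have ig: "integrable P (g ?x)" using f_def F_X by blast
    have "(\<integral>z. ?H (Y k w, z) \<partial>P) = ?c * (\<integral>z. g ?x z - fg ?x \<partial>P)" by simp
    also have "(\<integral>z. g ?x z - fg ?x \<partial>P) = 0"
      using ig by (subst Bochner_Integration.integral_diff) (auto simp: Pp.prob_space fg_def)
    finally show "(\<integral>z. ?H (Y k w, z) \<partial>P) = 0" by simp
  qed
  finally show ?thesis by simp
qed

lemma dl_sum_sq: "(\<integral>w. (\<Sum>k<N. dl k w)\<^sup>2 \<partial>M) \<le> real N * M1\<^sup>2"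
proof -
  have sq: "(\<Sum>k<N. dl k w)\<^sup>2 = (\<Sum>j<N. \<Sum>k<N. dl j w * dl k w)" for w
    by (simp add: power2_eq_square sum_product)
  have "(\<integral>w. (\<Sum>k<N. dl k w)\<^sup>2 \<partial>M) = (\<Sum>j<N. \<Sum>k<N. (\<integral>w. dl j w * dl k w \<partial>M))"
    unfolding sq using dl_prod_int
    by (simp add: Bochner_Integration.integral_sum Bochner_Integration.integrable_sum)
  also have "\<dots> = (\<Sum>j<N. (\<integral>w. (dl j w)\<^sup>2 \<partial>M))"
  proof (rule sum.cong[OF refl])
    fix j assume j: "j \<in> {..<N}"
    have "(\<Sum>k<N. (\<integral>w. dl j w * dl k w \<partial>M)) = (\<Sum>k<N. if k = j then (\<integral>w. (dl j w)\<^sup>2 \<partial>M) else 0)"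
    proof (rule sum.cong[OF refl])
      fix k
      show "(\<integral>w. dl j w * dl k w \<partial>M) = (if k = j then (\<integral>w. (dl j w)\<^sup>2 \<partial>M) else 0)"
      proof (cases "k = j")
        case True then show ?thesis by (simp add: power2_eq_square)
      next
        case False
        then consider "j < k" | "k < j" by linarith
        then show ?thesis
        proof cases
          case 1 then show ?thesis using dl_cross[of j k] False by simp
        next
          case 2 then show ?thesis using dl_cross[of k j] False by (simp add: mult.commute)
        qed
      qed
    qed
    also have "\<dots> = (\<integral>w. (dl j w)\<^sup>2 \<partial>M)" using j by simp
    finally show "(\<Sum>k<N. (\<integral>w. dl j w * dl k w \<partial>M)) = (\<integral>w. (dl j w)\<^sup>2 \<partial>M)" .
  qed
  also have "\<dots> \<le> (\<Sum>j<N. M1\<^sup>2)" by (rule sum_mono) (rule dl_sq_le)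
  also have "\<dots> = real N * M1\<^sup>2" by simp
  finally show ?thesis .
qed

lemma abs_exp_le:
  fixes Z :: "'w \<Rightarrow> real"
  assumes "integrable M Z" "integrable M (\<lambda>w. (Z w)\<^sup>2)"
  shows "(\<integral>w. \<bar>Z w\<bar> \<partial>M)\<^sup>2 \<le> (\<integral>w. (Z w)\<^sup>2 \<partial>M)"
proof -
  have i1: "integrable M (\<lambda>w. \<bar>Z w\<bar>)" using assms(1) by simp
  have i2: "integrable M (\<lambda>w. (\<bar>Z w\<bar>)\<^sup>2)" using assms(2) by simp
  have "0 \<le> Mp.variance (\<lambda>w. \<bar>Z w\<bar>)" by simp
  also have "\<dots> = (\<integral>w. (\<bar>Z w\<bar>)\<^sup>2 \<partial>M) - (\<integral>w. \<bar>Z w\<bar> \<partial>M)\<^sup>2" by (rule Mp.variance_eq[OF i1 i2])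
  finally show ?thesis by simp
qed

lemma dl_abs: "(\<integral>w. \<bar>\<Sum>k<N. dl k w\<bar> \<partial>M) \<le> sqrt (real N) * M1"
proof -
  have i1: "integrable M (\<lambda>w. \<Sum>k<N. dl k w)" using dl_int by simp
  have i2: "integrable M (\<lambda>w. (\<Sum>k<N. dl k w)\<^sup>2)"
  proof -
    have "(\<lambda>w. (\<Sum>k<N. dl k w)\<^sup>2) = (\<lambda>w. \<Sum>j<N. \<Sum>k<N. dl j w * dl k w)"
      by (simp add: power2_eq_square sum_product)
    then show ?thesis using dl_prod_int by (simp add: Bochner_Integration.integrable_sum)
  qed
  have "(\<integral>w. \<bar>\<Sum>k<N. dl k w\<bar> \<partial>M)\<^sup>2 \<le> real N * M1\<^sup>2"
    using abs_exp_le[OF i1 i2] dl_sum_sq[of N] by linarith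
  also have "\<dots> = (sqrt (real N) * M1)\<^sup>2" by (simp add: power_mult_distrib)
  finally have sq: "(\<integral>w. \<bar>\<Sum>k<N. dl k w\<bar> \<partial>M)\<^sup>2 \<le> (sqrt (real N) * M1)\<^sup>2" .
  have "0 \<le> sqrt (real N) * M1" using M_nonneg by simp
  with sq show ?thesis by (rule power2_le_imp_le)
qed

end



context nrm_loc begin
lemma dn_scale: assumes "c \<ge> 0" shows "dn (c *\<^sub>R z) = c * dn z"
proof (cases "c = 0")
  case True
  have "dn 0 \<le> 0" by (rule dn_le) simp
  with dn_nonneg[of 0] True show ?thesis by simp
next
  case False
  with assms have c: "c > 0" by simp
  have a: "dn (c *\<^sub>R z) \<le> c * dn z"
  proof (rule dn_le)
    fix y assume "nrm y \<le> 1"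
    then have "z \<bullet> y \<le> dn z" by (rule dn_ge)
    then show "(c *\<^sub>R z) \<bullet> y \<le> c * dn z" using c by simp
  qed
  have "dn z \<le> (1 / c) * dn (c *\<^sub>R z)"
  proof (rule dn_le)
    fix y assume "nrm y \<le> 1"
    then have "(c *\<^sub>R z) \<bullet> y \<le> dn (c *\<^sub>R z)" by (rule dn_ge)
    then show "z \<bullet> y \<le> (1 / c) * dn (c *\<^sub>R z)" using c by (simp add: field_simps)
  qed
  then have "c * dn z \<le> dn (c *\<^sub>R z)" using c by (simp add: field_simps)
  with a show ?thesis by simp
qed
end

context smd_loc begin

definition "Ak k w = f' (y k w) \<bullet> (y k w - xs)"

lemma Ak_eq: "Ak k w = fp (y k w) \<bullet> (y k w - xs)" by (simp add: Ak_def fp_eq y_X)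

lemma Ak_meas[measurable]: "Ak k \<in> borel_measurable M"
proof -
  have "Ak k = (\<lambda>w. fp (y k w) \<bullet> (y k w - xs))" by (simp add: fun_eq_iff Ak_eq)
  then show ?thesis by simp
qed

lemma Ak_bd: "\<bar>Ak k w\<bar> \<le> L * R0"
proof -
  have "\<bar>Ak k w\<bar> \<le> dn (f' (y k w)) * nrm (y k w - xs)" unfolding Ak_def by (rule dn_abs_inner)
  also have "\<dots> \<le> L * R0" using A1 y_X R0 dn_nonneg M_nonneg by (intro mult_mono) auto
  finally show ?thesis .
qed

lemma Ak_int: "integrable M (Ak k)"
  by (rule Bochner_Integration.integrable_bound[OF Mp.integrable_const[of "L * R0"] Ak_meas])
     (use Ak_bd M_nonneg R0 in \<open>auto intro!: AE_I2 simp: abs_le_iff\<close>)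

lemma Ak_ge_f: "f (y k w) - f xs \<le> Ak k w"
  using f'_sub y_X xs(1) unfolding is_subgrad_def Ak_def by (auto simp: inner_diff_right) (smt (verit, best) inner_diff_right)

lemma GB: "Gk k w \<bullet> (y k w - xs) = Ak k w + Bk k w"
  by (simp add: Ak_eq Bk_def inner_diff_left)

lemma tele:
  "(\<Sum>k<n. (\<gamma> *\<^sub>R Gk k w) \<bullet> (y k w - xs)) \<le> W (y 0 w) xs - W (y n w) xs + (\<Sum>k<n. (dn (\<gamma> *\<^sub>R Gk k w))\<^sup>2 / (2 * \<mu>))"
proof (induction n)
  case 0 then show ?case by simp
next
  case (Suc n)
  have "(\<gamma> *\<^sub>R Gk n w) \<bullet> (y n w - xs) \<le> W (y n w) xs - W (y (Suc n) w) xs + (dn (\<gamma> *\<^sub>R Gk n w))\<^sup>2 / (2 * \<mu>)"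
    unfolding y_Suc Gk_def by (rule step[OF y_sd xs(1)])
  with Suc show ?case by simp
qed

definition "B\<omega> = Sup (\<omega> ` X) - Inf (\<omega> ` X)"

lemma \<omega>_img_bdd: "bdd_above (\<omega> ` X)" "bdd_below (\<omega> ` X)"
proof -
  have "bounded (\<omega> ` X)" by (rule compact_imp_bounded[OF compact_continuous_image[OF \<omega>_cont compX]])
  then show "bdd_above (\<omega> ` X)" "bdd_below (\<omega> ` X)" by (auto simp: bounded_imp_bdd_above bounded_imp_bdd_below)
qed

lemma W0: "W (y 0 w) xs \<le> B\<omega>"
proof -
  have "W x\<omega> xs \<le> \<omega> xs - \<omega> x\<omega>" by (rule W_min(1)[OF x\<omega> xs(1)])
  moreover have "\<omega> xs \<le> Sup (\<omega> ` X)" using xs(1) \<omega>_img_bdd by (intro cSup_upper) auto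
  moreover have "Inf (\<omega> ` X) \<le> \<omega> x\<omega>" using x\<omega>(1) \<omega>_img_bdd by (intro cInf_lower) auto
  ultimately show ?thesis by (simp add: y_def B\<omega>_def)
qed

lemma B\<omega>_nonneg: "B\<omega> \<ge> 0"
proof -
  have "Inf (\<omega> ` X) \<le> \<omega> x\<omega>" using x\<omega>(1) \<omega>_img_bdd by (intro cInf_lower) auto
  moreover have "\<omega> x\<omega> \<le> Sup (\<omega> ` X)" using x\<omega>(1) \<omega>_img_bdd by (intro cSup_upper) auto
  ultimately show ?thesis by (simp add: B\<omega>_def)
qed

lemma pointwise:
  assumes "\<gamma> \<ge> 0"
  shows "\<gamma> * (\<Sum>k<N. Ak k w + Bk k w) \<le> B\<omega> + \<gamma>\<^sup>2 / (2 * \<mu>) * (\<Sum>k<N. (dn (Gk k w))\<^sup>2)"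
proof -
  have "\<gamma> * (\<Sum>k<N. Ak k w + Bk k w) = (\<Sum>k<N. (\<gamma> *\<^sub>R Gk k w) \<bullet> (y k w - xs))"
    by (simp add: GB sum_distrib_left)
  also have "\<dots> \<le> W (y 0 w) xs - W (y N w) xs + (\<Sum>k<N. (dn (\<gamma> *\<^sub>R Gk k w))\<^sup>2 / (2 * \<mu>))" by (rule tele)
  also have "\<dots> \<le> B\<omega> + (\<Sum>k<N. (dn (\<gamma> *\<^sub>R Gk k w))\<^sup>2 / (2 * \<mu>))"
    using W0[of w] W_nonneg[OF y_sd xs(1), of N w] by linarith
  also have "(\<Sum>k<N. (dn (\<gamma> *\<^sub>R Gk k w))\<^sup>2 / (2 * \<mu>)) = \<gamma>\<^sup>2 / (2 * \<mu>) * (\<Sum>k<N. (dn (Gk k w))\<^sup>2)"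
    by (simp add: dn_scale[OF assms] power_mult_distrib sum_distrib_left)
  finally show ?thesis .
qed

lemma sumA:
  assumes "\<gamma> \<ge> 0"
  shows "\<gamma> * (\<Sum>k<N. (\<integral>w. Ak k w \<partial>M)) \<le> B\<omega> + \<gamma>\<^sup>2 * real N * (M2\<^sup>2 + L\<^sup>2) / \<mu>"
proof -
  have i1: "integrable M (\<lambda>w. \<gamma> * (\<Sum>k<N. Ak k w + Bk k w))"
    using Ak_int Bk_int by simp
  have i2: "integrable M (\<lambda>w. B\<omega> + \<gamma>\<^sup>2 / (2 * \<mu>) * (\<Sum>k<N. (dn (Gk k w))\<^sup>2))"
    using Gk_sq(1) by simp
  have "\<gamma> * (\<Sum>k<N. (\<integral>w. Ak k w \<partial>M)) = (\<integral>w. \<gamma> * (\<Sum>k<N. Ak k w + Bk k w) \<partial>M)"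
    using Ak_int Bk_int Bk_zero
    by (simp add: Bochner_Integration.integral_sum Bochner_Integration.integral_add sum.distrib)
  also have "\<dots> \<le> (\<integral>w. B\<omega> + \<gamma>\<^sup>2 / (2 * \<mu>) * (\<Sum>k<N. (dn (Gk k w))\<^sup>2) \<partial>M)"
    by (rule integral_mono[OF i1 i2 pointwise[OF assms]])
  also have "\<dots> = B\<omega> + \<gamma>\<^sup>2 / (2 * \<mu>) * (\<Sum>k<N. (\<integral>w. (dn (Gk k w))\<^sup>2 \<partial>M))"
    using Gk_sq(1) by (simp add: Mp.prob_space Bochner_Integration.integral_sum)
  also have "\<dots> \<le> B\<omega> + \<gamma>\<^sup>2 / (2 * \<mu>) * (\<Sum>k<N. 2 * (M2\<^sup>2 + L\<^sup>2))"
    using Gk_sq(2) \<mu>_pos by (intro add_left_mono mult_left_mono sum_mono) auto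
  also have "\<dots> = B\<omega> + \<gamma>\<^sup>2 * real N * (M2\<^sup>2 + L\<^sup>2) / \<mu>" using \<mu>_pos by (simp add: field_simps)
  finally show ?thesis .
qed

end



lemma sum_shift1: "(\<Sum>\<tau>=1..N. u \<tau>) = (\<Sum>k<N. u (Suc k) :: 'c::comm_monoid_add)"
proof (induction N)
  case 0 then show ?case by simp
next
  case (Suc N) then show ?case by (simp add: add.commute)
qed

lemma alg:
  fixes B Sg n m a b c D :: real
  assumes "B = D\<^sup>2 / 2" "Sg = a\<^sup>2 / 2" "n = b\<^sup>2" "m = c\<^sup>2" "a > 0" "b > 0" "c > 0" "D > 0"
  shows "B / (D * c / (a * b)) + (D * c / (a * b)) * n * Sg / m = D * a * b / c"
  using assms(5-8) unfolding assms(1-4) by (simp add: field_simps power2_eq_square)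

lemma alg2:
  fixes n b c D a :: real
  assumes "n = b\<^sup>2" "b > 0" "c > 0"
  shows "D * a * b / c = n * (D * a / (c * b))"
  using assms(2,3) unfolding assms(1) by (simp add: field_simps power2_eq_square)

context smd_loc begin

lemma X_single:
  assumes "B\<omega> = 0" "u \<in> X" shows "u = x\<omega>"
proof -
  have sg: "is_subgrad X \<omega> x\<omega> 0" using x\<omega> unfolding is_subgrad_def by simp
  have a: "\<omega> x\<omega> + 0 \<bullet> (u - x\<omega>) + \<mu> / 2 * (nrm (u - x\<omega>))\<^sup>2 \<le> \<omega> u"
    by (rule strong_subgrad[OF x\<omega>(1) sg assms(2)])
  have "\<omega> u \<le> Sup (\<omega> ` X)" using assms(2) \<omega>_img_bdd by (intro cSup_upper) auto
  moreover have "Inf (\<omega> ` X) \<le> \<omega> x\<omega>" using x\<omega>(1) \<omega>_img_bdd by (intro cInf_lower) auto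
  ultimately have "\<mu> / 2 * (nrm (u - x\<omega>))\<^sup>2 \<le> 0" using a assms(1) by (simp add: B\<omega>_def)
  then have "(nrm (u - x\<omega>))\<^sup>2 \<le> 0" using \<mu>_pos by (simp add: mult_le_0_iff)
  then have "nrm (u - x\<omega>) = 0" using nonneg[of "u - x\<omega>"] by (simp add: power2_eq_square mult_le_0_iff)
  then show ?thesis by simp
qed

lemma keyA:
  assumes N: "N \<ge> 1"
    and \<gamma>: "\<gamma> = sqrt (2 * B\<omega>) * sqrt \<mu> / (sqrt (2 * (M2\<^sup>2 + L\<^sup>2)) * sqrt (real N))"
  shows "(\<Sum>k<N. (\<integral>w. Ak k w \<partial>M)) \<le> real N * (sqrt (2 * B\<omega>) * sqrt (2 * (M2\<^sup>2 + L\<^sup>2)) / (sqrt \<mu> * sqrt (real N)))"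
    (is "?S \<le> real N * ?R")
proof -
  let ?Sg = "M2\<^sup>2 + L\<^sup>2"
  have R_nonneg: "?R \<ge> 0" using \<mu>_pos B\<omega>_nonneg by simp
  consider (S0) "?Sg = 0" | (B0) "B\<omega> = 0" | (pos) "?Sg > 0" "B\<omega> > 0"
    using B\<omega>_nonneg by (metis add_nonneg_nonneg less_eq_real_def zero_le_power2)
  then show ?thesis
  proof cases
    case S0
    then have "L = 0" by (metis add_nonneg_eq_0_iff power_eq_0_iff zero_le_power2)
    then have "Ak k w = 0" for k w using Ak_bd[of k w] by simp
    then have "?S = 0" by simp
    moreover have "0 \<le> real N * ?R" by (rule mult_nonneg_nonneg[OF _ R_nonneg]) simp
    ultimately show ?thesis by linarith
  next
    case B0
    have "Ak k w = 0" for k w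
    proof -
      have "y k w = x\<omega>" "xs = x\<omega>" using X_single[OF B0] y_X xs(1) by auto
      then have e: "y k w - xs = 0" by simp
      show ?thesis unfolding Ak_def e by simp
    qed
    then have "?S = 0" by simp
    moreover have "0 \<le> real N * ?R" by (rule mult_nonneg_nonneg[OF _ R_nonneg]) simp
    ultimately show ?thesis by linarith
  next
    case pos
    define a where "a = sqrt (2 * ?Sg)"
    define b where "b = sqrt (real N)"
    define c where "c = sqrt \<mu>"
    define D where "D = sqrt (2 * B\<omega>)"
    have a2: "a\<^sup>2 = 2 * ?Sg" and ap: "a > 0" using pos by (simp_all add: a_def)
    have b2: "b\<^sup>2 = real N" and bp: "b > 0" using N by (simp_all add: b_def)
    have c2: "c\<^sup>2 = \<mu>" and cp: "c > 0" using \<mu>_pos by (simp_all add: c_def)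
    have D2: "D\<^sup>2 = 2 * B\<omega>" and Dp: "D > 0" using pos by (simp_all add: D_def)
    have \<gamma>': "\<gamma> = D * c / (a * b)" using \<gamma> by (simp add: a_def b_def c_def D_def)
    have gp: "\<gamma> > 0" using \<gamma>' ap bp cp Dp by simp
    have "\<gamma> * ?S \<le> B\<omega> + \<gamma>\<^sup>2 * real N * ?Sg / \<mu>" by (rule sumA) (use gp in simp)
    then have "?S \<le> B\<omega> / \<gamma> + \<gamma> * real N * ?Sg / \<mu>"
      using gp by (simp add: field_simps power2_eq_square)
    also have "\<dots> = D * a * b / c"
      unfolding \<gamma>' by (rule alg) (use a2 b2 c2 D2 ap bp cp Dp in simp_all)
    also have "\<dots> = real N * ?R"
    proof -
      have r: "D * a / (c * b) = ?R" by (simp add: a_def b_def c_def D_def)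
      show ?thesis using alg2[OF b2[symmetric] bp cp, of D a] unfolding r .
    qed
    finally show ?thesis .
  qed
qed

end



lemma alg3:
  fixes n b M1 R :: real
  assumes "n = b\<^sup>2" "b > 0"
  shows "(1 / n) * (b * M1) + (1 / n) * (n * R) = M1 / b + R"
  using assms(2) unfolding assms(1) by (simp add: field_simps power2_eq_square)

context smd_loc begin

lemma C2:
  assumes N: "N \<ge> 1" and \<rho>: "\<rho> \<ge> 2" and \<mu>f: "\<mu>f > 0" and f_unif: "unif_convex_on X nrm f \<rho> \<mu>f"
    and kA: "(\<Sum>k<N. (\<integral>w. Ak k w \<partial>M)) \<le> real N * R"
  shows "(\<integral>\<^sup>+ w. ennreal (nrm ((1 / real N) *\<^sub>R (\<Sum>\<tau>=1..N. y (\<tau> - 1) w) - xs) powr \<rho>) \<partial>M)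
          \<le> ennreal (R / \<mu>f)"
proof -
  have Np: "real N > 0" using N by simp
  have n4: "nrm (y k w - xs) powr \<rho> \<le> Ak k w / \<mu>f" for k w
  proof -
    have "\<mu>f * nrm (y k w - xs) powr \<rho> \<le> f' (y k w) \<bullet> (y k w - xs)"
      by (rule unif_grad[OF X(4) f_unif _ y_X xs]) (use \<rho> f'_sub y_X in auto)
    then show ?thesis using \<mu>f by (simp add: Ak_def field_simps)
  qed
  have Ak_nn: "0 \<le> Ak k w" for k w
  proof -
    have "0 \<le> nrm (y k w - xs) powr \<rho>" by simp
    then have "0 \<le> Ak k w / \<mu>f" using n4[of k w] by linarith
    then show ?thesis using \<mu>f by (simp add: zero_le_divide_iff)
  qed
  have P2: "nrm ((1 / real N) *\<^sub>R (\<Sum>\<tau>=1..N. y (\<tau> - 1) w) - xs) powr \<rho> \<le> (1 / (real N * \<mu>f)) * (\<Sum>k<N. Ak k w)" for w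
  proof -
    let ?r = "\<lambda>k. nrm (y k w - xs)"
    have s1: "(\<Sum>\<tau>=1..N. y (\<tau> - 1) w) = (\<Sum>k<N. y k w)"
      using sum_shift1[of "\<lambda>\<tau>. y (\<tau> - 1) w" N] by simp
    have s2: "(1 / real N) *\<^sub>R (\<Sum>k<N. y k w) - xs = (1 / real N) *\<^sub>R (\<Sum>k<N. (y k w - xs))"
      using Np by (simp add: sum_subtractf scaleR_diff_right sum_constant_scaleR)
    have n1: "nrm ((1 / real N) *\<^sub>R (\<Sum>k<N. (y k w - xs))) \<le> (1 / real N) * (\<Sum>k<N. ?r k)"
    proof -
      have "nrm ((1 / real N) *\<^sub>R (\<Sum>k<N. (y k w - xs))) = (1 / real N) * nrm (\<Sum>k<N. (y k w - xs))"
        by (simp add: scal)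
      also have "\<dots> \<le> (1 / real N) * (\<Sum>k<N. ?r k)" using Np by (intro mult_left_mono sum_le) auto
      finally show ?thesis .
    qed
    have "nrm ((1 / real N) *\<^sub>R (\<Sum>\<tau>=1..N. y (\<tau> - 1) w) - xs) powr \<rho> \<le> ((1 / real N) * (\<Sum>k<N. ?r k)) powr \<rho>"
      unfolding s1 s2 using n1 \<rho> by (intro powr_mono2) auto
    also have "\<dots> \<le> (1 / real N) * (\<Sum>k<N. ?r k powr \<rho>)" by (rule avg_powr) (use N \<rho> in auto)
    also have "\<dots> \<le> (1 / real N) * (\<Sum>k<N. Ak k w / \<mu>f)" using Np by (intro mult_left_mono sum_mono n4) auto
    also have "\<dots> = (1 / (real N * \<mu>f)) * (\<Sum>k<N. Ak k w)" by (simp add: sum_divide_distrib[symmetric])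
    finally show ?thesis .
  qed
  have iT: "integrable M (\<lambda>w. (1 / (real N * \<mu>f)) * (\<Sum>k<N. Ak k w))" using Ak_int by simp
  have "(\<integral>\<^sup>+ w. ennreal (nrm ((1 / real N) *\<^sub>R (\<Sum>\<tau>=1..N. y (\<tau> - 1) w) - xs) powr \<rho>) \<partial>M)
        \<le> (\<integral>\<^sup>+ w. ennreal ((1 / (real N * \<mu>f)) * (\<Sum>k<N. Ak k w)) \<partial>M)"
    by (rule nn_integral_mono) (rule ennreal_leI[OF P2])
  also have "\<dots> = ennreal (\<integral>w. (1 / (real N * \<mu>f)) * (\<Sum>k<N. Ak k w) \<partial>M)"
    by (rule nn_integral_eq_integral[OF iT]) (use Ak_nn \<mu>f Np in \<open>auto intro!: AE_I2 divide_nonneg_nonneg sum_nonneg\<close>)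
  also have "(\<integral>w. (1 / (real N * \<mu>f)) * (\<Sum>k<N. Ak k w) \<partial>M) = (1 / (real N * \<mu>f)) * (\<Sum>k<N. (\<integral>w. Ak k w \<partial>M))"
    using Ak_int by (simp add: Bochner_Integration.integral_sum)
  also have "\<dots> \<le> (1 / (real N * \<mu>f)) * (real N * R)" using kA Np \<mu>f by (intro mult_left_mono) auto
  also have "\<dots> = R / \<mu>f" using Np by simp
  finally show ?thesis by (simp add: ennreal_leI)
qed

lemma C1:
  assumes N: "N \<ge> 1" and kA: "(\<Sum>k<N. (\<integral>w. Ak k w \<partial>M)) \<le> real N * R"
  shows "(\<integral>\<^sup>+ w. ennreal \<bar>(1 / real N) * (\<Sum>\<tau>=1..N. g (y (\<tau> - 1) w) (\<xi> \<tau> w)) - f xs\<bar> \<partial>M)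
          \<le> ennreal (M1 / sqrt (real N) + R)"
proof -
  have Np: "real N > 0" using N by simp
  define T where "T w = (1 / real N) * \<bar>\<Sum>k<N. dl k w\<bar> + (1 / real N) * (\<Sum>k<N. Ak k w)" for w
  have P1: "\<bar>(1 / real N) * (\<Sum>\<tau>=1..N. g (y (\<tau> - 1) w) (\<xi> \<tau> w)) - f xs\<bar> \<le> T w" for w
  proof -
    have s1: "(\<Sum>\<tau>=1..N. g (y (\<tau> - 1) w) (\<xi> \<tau> w)) = (\<Sum>k<N. g (y k w) (\<xi> (Suc k) w))"
      using sum_shift1[of "\<lambda>\<tau>. g (y (\<tau> - 1) w) (\<xi> \<tau> w)" N] by simp
    have gk: "g (y k w) (\<xi> (Suc k) w) = dl k w + (f (y k w) - f xs) + f xs" for k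
      by (simp add: dl_def fg_eq y_X)
    have s2: "(\<Sum>k<N. g (y k w) (\<xi> (Suc k) w)) = (\<Sum>k<N. dl k w) + (\<Sum>k<N. f (y k w) - f xs) + real N * f xs"
      unfolding gk by (simp add: sum.distrib sum_subtractf)
    have e: "(1 / real N) * (\<Sum>\<tau>=1..N. g (y (\<tau> - 1) w) (\<xi> \<tau> w)) - f xs
        = (1 / real N) * (\<Sum>k<N. dl k w) + (1 / real N) * (\<Sum>k<N. f (y k w) - f xs)"
      unfolding s1 s2 using Np by (simp add: field_simps)
    have nn: "0 \<le> (\<Sum>k<N. f (y k w) - f xs)" using xs y_X by (intro sum_nonneg) auto
    have le: "(\<Sum>k<N. f (y k w) - f xs) \<le> (\<Sum>k<N. Ak k w)" by (intro sum_mono Ak_ge_f)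
    have "\<bar>(1 / real N) * (\<Sum>k<N. dl k w) + (1 / real N) * (\<Sum>k<N. f (y k w) - f xs)\<bar>
          \<le> (1 / real N) * \<bar>\<Sum>k<N. dl k w\<bar> + (1 / real N) * (\<Sum>k<N. f (y k w) - f xs)"
      using abs_triangle_ineq[of "(1 / real N) * (\<Sum>k<N. dl k w)" "(1 / real N) * (\<Sum>k<N. f (y k w) - f xs)"]
        nn Np by (simp add: abs_mult)
    also have "\<dots> \<le> T w" unfolding T_def using le Np by (intro add_left_mono mult_left_mono) auto
    finally show ?thesis unfolding e .
  qed
  have iT: "integrable M T" unfolding T_def using Ak_int dl_int by simp
  have Tnn: "0 \<le> T w" for w
  proof -
    have "0 \<le> Ak k w" for k
    proof -
      have "f xs \<le> f (y k w)" using xs(2) y_X by blast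
      with Ak_ge_f[of k w] show ?thesis by linarith
    qed
    then have "0 \<le> (\<Sum>k<N. Ak k w)" by (intro sum_nonneg)
    then show ?thesis unfolding T_def using Np by simp
  qed
  have "(\<integral>\<^sup>+ w. ennreal \<bar>(1 / real N) * (\<Sum>\<tau>=1..N. g (y (\<tau> - 1) w) (\<xi> \<tau> w)) - f xs\<bar> \<partial>M)
        \<le> (\<integral>\<^sup>+ w. ennreal (T w) \<partial>M)"
    by (rule nn_integral_mono) (rule ennreal_leI[OF P1])
  also have "\<dots> = ennreal (\<integral>w. T w \<partial>M)"
    by (rule nn_integral_eq_integral[OF iT]) (use Tnn in auto)
  also have "(\<integral>w. T w \<partial>M) = (1 / real N) * (\<integral>w. \<bar>\<Sum>k<N. dl k w\<bar> \<partial>M) + (1 / real N) * (\<Sum>k<N. (\<integral>w. Ak k w \<partial>M))"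
    unfolding T_def using Ak_int dl_int by (simp add: Bochner_Integration.integral_sum)
  also have "\<dots> \<le> (1 / real N) * (sqrt (real N) * M1) + (1 / real N) * (real N * R)"
    using dl_abs[of N] kA Np by (intro add_mono mult_left_mono) auto
  also have "\<dots> = M1 / sqrt (real N) + R" by (rule alg3) (use Np in simp_all)
  finally show ?thesis by (simp add: ennreal_leI)
qed

end



context smd_loc begin

lemma final:
  assumes N: "N \<ge> 1" and \<rho>: "\<rho> \<ge> 2" and \<mu>f: "\<mu>f > 0" and f_unif: "unif_convex_on X nrm f \<rho> \<mu>f"
    and \<gamma>: "\<gamma> = sqrt (2 * (Sup (\<omega> ` X) - Inf (\<omega> ` X))) * sqrt \<mu> / (sqrt (2 * (M2\<^sup>2 + L\<^sup>2)) * sqrt (real N))"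
  shows
    "let D = sqrt (2 * (Sup (\<omega> ` X) - Inf (\<omega> ` X)));
         \<gamma> = D * sqrt \<mu> / (sqrt (2 * (M2\<^sup>2 + L\<^sup>2)) * sqrt (real N));
         x = (\<lambda>\<tau> w. smd X \<omega> \<omega>' \<gamma> G x\<omega> \<xi> (\<tau> - 1) w);
         xN = (\<lambda>w. (1 / real N) *\<^sub>R (\<Sum>\<tau>=1..N. x \<tau> w));
         gN = (\<lambda>w. (1 / real N) * (\<Sum>\<tau>=1..N. g (x \<tau> w) (\<xi> \<tau> w)))
     in (\<integral>\<^sup>+ w. ennreal \<bar>gN w - f xs\<bar> \<partial>M)
          \<le> ennreal ((M1 + D / sqrt \<mu> * sqrt (2 * (M2\<^sup>2 + L\<^sup>2))) / sqrt (real N))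
      \<and> (\<integral>\<^sup>+ w. ennreal (nrm (xN w - xs) powr \<rho>) \<partial>M)
          \<le> ennreal (D * sqrt (2 * (M2\<^sup>2 + L\<^sup>2)) / (\<mu>f * sqrt \<mu> * sqrt (real N)))"
proof -
  define D where "D = sqrt (2 * (Sup (\<omega> ` X) - Inf (\<omega> ` X)))"
  define R where "R = D * sqrt (2 * (M2\<^sup>2 + L\<^sup>2)) / (sqrt \<mu> * sqrt (real N))"
  have \<gamma>': "\<gamma> = sqrt (2 * B\<omega>) * sqrt \<mu> / (sqrt (2 * (M2\<^sup>2 + L\<^sup>2)) * sqrt (real N))"
    using \<gamma> by (simp add: B\<omega>_def)
  have kA: "(\<Sum>k<N. (\<integral>w. Ak k w \<partial>M)) \<le> real N * R"
    using keyA[OF N \<gamma>'] by (simp add: R_def D_def B\<omega>_def)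
  have c1: "(\<integral>\<^sup>+ w. ennreal \<bar>(1 / real N) * (\<Sum>\<tau>=1..N. g (y (\<tau> - 1) w) (\<xi> \<tau> w)) - f xs\<bar> \<partial>M)
          \<le> ennreal ((M1 + D / sqrt \<mu> * sqrt (2 * (M2\<^sup>2 + L\<^sup>2))) / sqrt (real N))"
  proof -
    have "M1 / sqrt (real N) + R = (M1 + D / sqrt \<mu> * sqrt (2 * (M2\<^sup>2 + L\<^sup>2))) / sqrt (real N)"
      by (simp add: R_def add_divide_distrib)
    with C1[OF N kA] show ?thesis by simp
  qed
  have c2: "(\<integral>\<^sup>+ w. ennreal (nrm ((1 / real N) *\<^sub>R (\<Sum>\<tau>=1..N. y (\<tau> - 1) w) - xs) powr \<rho>) \<partial>M)
          \<le> ennreal (D * sqrt (2 * (M2\<^sup>2 + L\<^sup>2)) / (\<mu>f * sqrt \<mu> * sqrt (real N)))"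
  proof -
    have "R / \<mu>f = D * sqrt (2 * (M2\<^sup>2 + L\<^sup>2)) / (\<mu>f * sqrt \<mu> * sqrt (real N))"
      by (simp add: R_def field_simps)
    with C2[OF N \<rho> \<mu>f f_unif kA] show ?thesis by simp
  qed
  have \<gamma>D: "\<gamma> = D * sqrt \<mu> / (sqrt (2 * (M2\<^sup>2 + L\<^sup>2)) * sqrt (real N))" using \<gamma> by (simp add: D_def)
  show ?thesis
    unfolding Let_def
    unfolding D_def[symmetric]
    unfolding \<gamma>D[symmetric]
    unfolding y_def[symmetric]
    using c1 c2 by (intro conjI)
qed

end

theorem lemma6:
  fixes M :: "'w measure" and P :: "'b measure"
    and \<xi> :: "nat \<Rightarrow> 'w \<Rightarrow> 'b"
    and X :: "'a::euclidean_space set" and nrm :: "'a \<Rightarrow> real"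
    and \<omega> :: "'a \<Rightarrow> real" and \<omega>' :: "'a \<Rightarrow> 'a" and \<mu>\<omega> :: real and x\<omega> :: 'a
    and g :: "'a \<Rightarrow> 'b \<Rightarrow> real" and G :: "'a \<Rightarrow> 'b \<Rightarrow> 'a"
    and f :: "'a \<Rightarrow> real" and f' :: "'a \<Rightarrow> 'a"
    and L M1 M2 \<rho> \<mu>f :: real and xs :: 'a and N :: nat
  assumes
    \<comment> \<open>proximal setup\<close>
    norm: "is_norm nrm"
    and X: "X \<noteq> {}" "closed X" "bounded X" "convex X"
    and \<omega>_conv: "convex_on X \<omega>" and \<omega>_cont: "continuous_on X \<omega>"
    and \<omega>'_sub: "\<forall>x\<in>subdiff_dom X \<omega>. is_subgrad X \<omega> x (\<omega>' x)"
    and \<omega>'_cont: "continuous_on (subdiff_dom X \<omega>) \<omega>'"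
    and \<mu>\<omega>_pos: "\<mu>\<omega> > 0" and \<omega>_strong: "strongly_convex_on X nrm \<omega> \<mu>\<omega>"
    and x\<omega>: "x\<omega> \<in> X" "\<forall>y\<in>X. \<omega> x\<omega> \<le> \<omega> y"
    \<comment> \<open>stochastic problem and oracle\<close>
    and prob: "prob_space M"
    and \<xi>_meas: "\<forall>t\<ge>1. \<xi> t \<in> measurable M P"
    and \<xi>_dist: "\<forall>t\<ge>1. distr M P (\<xi> t) = P"
    and \<xi>_indep: "prob_space.indep_vars M (\<lambda>_. P) \<xi> {1..}"
    and g_meas: "(\<lambda>(x, z). g x z) \<in> borel_measurable (borel \<Otimes>\<^sub>M P)"
    and g_conv: "\<forall>z\<in>space P. convex_on X (\<lambda>x. g x z)"
    and G_meas: "(\<lambda>(x, z). G x z) \<in> borel_measurable (borel \<Otimes>\<^sub>M P)"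
    and G_sub: "\<forall>x\<in>X. \<forall>z\<in>space P. is_subgrad X (\<lambda>y. g y z) x (G x z)"
    and f_conv: "convex_on X f" and f_lip: "\<exists>K. K-lipschitz_on X f"
    \<comment> \<open>Assumption 2\<close>
    and f_def: "\<forall>x\<in>X. integrable P (g x) \<and> f x = (\<integral>z. g x z \<partial>P)"
    and f'_def: "\<forall>x\<in>X. integrable P (G x) \<and> f' x = (\<integral>z. G x z \<partial>P)"
    and f'_sub: "\<forall>x\<in>X. is_subgrad X f x (f' x)"
    \<comment> \<open>Assumption 1\<close>
    and A1: "\<forall>x\<in>X. dual_norm nrm (f' x) \<le> L"
    \<comment> \<open>Assumption 3\<close>
    and M_nonneg: "L \<ge> 0" "M1 \<ge> 0" "M2 \<ge> 0"
    and A3a: "\<forall>x\<in>X. (\<integral>\<^sup>+ z. ennreal ((g x z - f x)\<^sup>2) \<partial>P) \<le> ennreal (M1\<^sup>2)"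
    and A3b: "\<forall>x\<in>X. (\<integral>\<^sup>+ z. ennreal ((dual_norm nrm (G x z - f' x))\<^sup>2) \<partial>P) \<le> ennreal (M2\<^sup>2)"
    \<comment> \<open>uniform convexity of f and its minimizer\<close>
    and \<rho>: "\<rho> \<ge> 2" and \<mu>f_pos: "\<mu>f > 0" and f_unif: "unif_convex_on X nrm f \<rho> \<mu>f"
    and xs: "xs \<in> X" "\<forall>y\<in>X. f xs \<le> f y"
    and N: "N \<ge> 1"
  shows
    "let D = sqrt (2 * (Sup (\<omega> ` X) - Inf (\<omega> ` X)));
         \<gamma> = D * sqrt \<mu>\<omega> / (sqrt (2 * (M2\<^sup>2 + L\<^sup>2)) * sqrt (real N));
         x = (\<lambda>\<tau> w. smd X \<omega> \<omega>' \<gamma> G x\<omega> \<xi> (\<tau> - 1) w);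
         xN = (\<lambda>w. (1 / real N) *\<^sub>R (\<Sum>\<tau>=1..N. x \<tau> w));
         gN = (\<lambda>w. (1 / real N) * (\<Sum>\<tau>=1..N. g (x \<tau> w) (\<xi> \<tau> w)))
     in (\<integral>\<^sup>+ w. ennreal \<bar>gN w - f xs\<bar> \<partial>M)
          \<le> ennreal ((M1 + D / sqrt \<mu>\<omega> * sqrt (2 * (M2\<^sup>2 + L\<^sup>2))) / sqrt (real N))
      \<and> (\<integral>\<^sup>+ w. ennreal (nrm (xN w - xs) powr \<rho>) \<partial>M)
          \<le> ennreal (D * sqrt (2 * (M2\<^sup>2 + L\<^sup>2)) / (\<mu>f * sqrt \<mu>\<omega> * sqrt (real N)))"
proof -
  interpret smd_loc nrm X \<omega> \<omega>' \<mu>\<omega> M P \<xi> g G f f' L M1 M2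
    "sqrt (2 * (Sup (\<omega> ` X) - Inf (\<omega> ` X))) * sqrt \<mu>\<omega> / (sqrt (2 * (M2\<^sup>2 + L\<^sup>2)) * sqrt (real N))"
    x\<omega> xs
    by (intro smd_loc.intro prox_loc.intro nrm_loc.intro prox_loc_axioms.intro smd_loc_axioms.intro)
       (use assms in auto)
  show ?thesis by (rule final[OF N \<rho> \<mu>f_pos f_unif refl])
qed

end
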